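(* Let $A_i\in\mathbb{R}^{n\times n}$, $i\ge -1$, be entrywise nonnegative matrices such that $A=\sum_{i=-1}^{\infty}A_i$ is irreducible and row stochastic. Assume that $\sum_{i=-1}^\infty iA_i$ converges and $\eta=\mathbf v^T\mathbf w<0$, where $\mathbf v>0$ satisfies $\mathbf v^TA=\mathbf v^T$, $\mathbf v^T\mathbf e=1$, and $\mathbf w=\sum_{i=-1}^\infty iA_i\mathbf e$. Let $G$ be the componentwise minimal nonnegative solution of $X=\sum_{i=-1}^{\infty}A_iX^{i+1}$. Let $W=\sum_{i=1}^\infty A_i\sum_{j=0}^i G^j$ and, for real $\omega$, \[ P(\omega)=(I_n-A_0)^{-1}W-\omega(I_n-A_0)^{-1}A_1(I_n+G)\bigl(I_n-(I_n-A_0)^{-1}W\bigr), \] with $\rho_\omega=\rho(P(\omega))$ its spectral radius. Let $\hat\omega\ge1$ satisfy $\hat\omega A_1(I_n+G)(I_n-A_0)^{-1}(I_n-A_0-W)\le W$, and let $0\le\omega\le\hat\omega$. Assume that the Perron eigenvector $\mathbf z$ of $P(0)$ (i.e. $P(0)\mathbf z=\rho_0\mathbf z$) is entrywise positive. Let $\mathbf u=(I_n-A_0)^{-1}A_1(I_n+G)\mathbf z$, $\sigma_{\min}=\min_i u_i/z_i$, $\sigma_{\max}=\max_i u_i/z_i$. Then \[ \rho_0-\omega(1-\rho_0)\sigma_{\max}\le\rho_\omega\le\rho_0-\omega(1-\rho_0)\sigma_{\min}, \] and $0\le\sigma_{\min},\sigma_{\max}\le\rho_0$.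
   Context: $\mathbf e$ is the all-ones vector; inequalities between matrices/vectors are entrywise. $P(0)=(I_n-A_0)^{-1}W$ is entrywise nonnegative. *)

theory Defs
  imports "HOL-Analysis.Analysis"
begin

primrec matpow :: "'a::comm_ring_1^'n^'n \<Rightarrow> nat \<Rightarrow> 'a^'n^'n" where
  "matpow M 0 = mat 1"
| "matpow M (Suc k) = M ** matpow M k"

definition mat_nonneg :: "real^'n^'m \<Rightarrow> bool" where
  "mat_nonneg M \<longleftrightarrow> (\<forall>i j. M $ i $ j \<ge> 0)"

definition mat_le :: "real^'n^'m \<Rightarrow> real^'n^'m \<Rightarrow> bool" where
  "mat_le M N \<longleftrightarrow> (\<forall>i j. M $ i $ j \<le> N $ i $ j)"

definition ones :: "real^'n" where
  "ones = (\<chi> i. 1)"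

definition irreducible_mat :: "real^'n^'n \<Rightarrow> bool" where
  "irreducible_mat M \<longleftrightarrow> (\<forall>i j. \<exists>k>0. matpow M k $ i $ j > 0)"

definition row_stochastic :: "real^'n^'n \<Rightarrow> bool" where
  "row_stochastic M \<longleftrightarrow> mat_nonneg M \<and> M *v ones = ones"

definition spectral_radius :: "real^'n^'n \<Rightarrow> real" where
  "spectral_radius M = Max {cmod l | l. \<exists>x::complex^'n. x \<noteq> 0 \<and>
      (\<chi> i j. complex_of_real (M $ i $ j)) *v x = l *s x}"

end

theory Submission
  imports Defs "HOL-Computational_Algebra.Polynomial"
begin

lemma mat_mult_vec_scalar:
  fixes x :: "'a::comm_ring_1^'n"
  shows "mat l *v x = l *s x"
  by (simp add: matrix_vector_mult_def mat_def vec_eq_iff if_distrib if_distribR sum.delta' cong: if_cong)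

lemma det_zero_kernel:
  fixes A :: "'a::field^'n^'n"
  assumes "det A = 0"
  shows "\<exists>x. x \<noteq> 0 \<and> A *v x = 0"
proof -
  have "\<not> inj ((*v) A)"
    using det_nz_iff_inj_gen[OF matrix_vector_mul_linear_gen[of A]] assms
    by (simp add: matrix_of_matrix_vector_mul)
  then obtain x y where "x \<noteq> y" "A *v x = A *v y" unfolding inj_def by auto
  then show ?thesis by (intro exI[of _ "x - y"]) (simp add: matrix_vector_mult_diff_distrib)
qed

lemma kernel_det_zero:
  fixes A :: "'a::field^'n^'n"
  assumes "x \<noteq> 0" "A *v x = 0"
  shows "det A = 0"
proof -
  have "\<not> inj ((*v) A)" using assms unfolding inj_def
    by (metis matrix_vector_mult_0_right)
  then show ?thesis
    using det_nz_iff_inj_gen[OF matrix_vector_mul_linear_gen[of A]]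
    by (simp add: matrix_of_matrix_vector_mul)
qed

lemma exists_max_index:
  fixes f :: "'n::finite \<Rightarrow> real"
  obtains i where "\<And>j. f j \<le> f i"
proof -
  have "Max (range f) \<in> range f" by (rule Max_in) auto
  then obtain i where "f i = Max (range f)" by (metis imageE)
  moreover have "f j \<le> Max (range f)" for j by (rule Max_ge) auto
  ultimately show ?thesis using that[of i] by simp
qed

lemma exists_min_index:
  fixes f :: "'n::finite \<Rightarrow> real"
  obtains i where "\<And>j. f i \<le> f j"
  using exists_max_index[of "\<lambda>j. - f j"] by (metis neg_le_iff_le)

lemma shift_inj:
  fixes M :: "complex^'n^'n"
  assumes "(mat l - M) *v x = 0"
    and "cmod l > (\<Sum>i\<in>UNIV. \<Sum>j\<in>UNIV. cmod (M $ i $ j))"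
  shows "x = 0"
proof (rule ccontr)
  assume x0: "x \<noteq> 0"
  obtain i where imax: "\<And>j. cmod (x $ j) \<le> cmod (x $ i)"
    using exists_max_index[of "\<lambda>j. cmod (x $ j)"] by blast
  have xi: "cmod (x $ i) > 0"
  proof -
    obtain k where "x $ k \<noteq> 0" using x0 by (metis vec_eq_iff zero_index)
    then show ?thesis using imax[of k] by (meson norm_le_zero_iff not_le order.strict_trans1 zero_less_norm_iff)
  qed
  have "l *s x = M *v x" using assms(1) by (simp add: matrix_vector_mult_diff_rdistrib mat_mult_vec_scalar)
  then have "(l *s x) $ i = (M *v x) $ i" by simp
  then have e: "l * x $ i = (\<Sum>j\<in>UNIV. M $ i $ j * x $ j)"
    by (simp add: matrix_vector_mult_def)
  have "cmod l * cmod (x $ i) = cmod (\<Sum>j\<in>UNIV. M $ i $ j * x $ j)"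
    by (simp add: e[symmetric] norm_mult)
  also have "\<dots> \<le> (\<Sum>j\<in>UNIV. cmod (M $ i $ j * x $ j))" by (rule norm_sum)
  also have "\<dots> = (\<Sum>j\<in>UNIV. cmod (M $ i $ j) * cmod (x $ j))" by (simp add: norm_mult)
  also have "\<dots> \<le> (\<Sum>j\<in>UNIV. cmod (M $ i $ j) * cmod (x $ i))"
    by (intro sum_mono mult_left_mono imax) auto
  also have "\<dots> = (\<Sum>j\<in>UNIV. cmod (M $ i $ j)) * cmod (x $ i)" by (simp add: sum_distrib_right)
  also have "\<dots> \<le> (\<Sum>i\<in>UNIV. \<Sum>j\<in>UNIV. cmod (M $ i $ j)) * cmod (x $ i)"
    by (intro mult_right_mono member_le_sum) (auto intro: sum_nonneg)
  finally have "cmod l \<le> (\<Sum>i\<in>UNIV. \<Sum>j\<in>UNIV. cmod (M $ i $ j))" using xi by simp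
  then show False using assms(2) by simp
qed

lemma det_shift_poly:
  fixes M :: "complex^'n^'n"
  shows "\<exists>p. p \<noteq> 0 \<and> (\<forall>l. det (mat l - M) = poly p l)"
proof -
  define p where "p = (\<Sum>q\<in>{q. q permutes (UNIV::'n set)}. [:of_int (sign q):] *
      (\<Prod>i\<in>UNIV. [: - M $ i $ q i, if i = q i then 1 else 0 :]))"
  have ev: "det (mat l - M) = poly p l" for l
    unfolding p_def det_def poly_sum poly_prod
    by (intro sum.cong refl) (auto simp: mat_def poly_prod intro!: prod.cong)
  define K where "K = (\<Sum>i\<in>UNIV. \<Sum>j\<in>UNIV. cmod (M $ i $ j))"
  define l0 where "l0 = complex_of_real (K + 1)"
  have K0: "K \<ge> 0" unfolding K_def by (intro sum_nonneg) auto
  have "cmod l0 > K" unfolding l0_def using K0 by simp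
  then have "det (mat l0 - M) \<noteq> 0"
    using shift_inj[of l0 M] det_zero_kernel[of "mat l0 - M"] unfolding K_def by blast
  then have "p \<noteq> 0" using ev[of l0] by auto
  then show ?thesis using ev by blast
qed

lemma eigenvalues_finite:
  fixes M :: "complex^'n^'n"
  shows "finite {l. \<exists>x. x \<noteq> 0 \<and> M *v x = l *s x}"
proof -
  obtain p where p: "p \<noteq> 0" "\<And>l. det (mat l - M) = poly p l" using det_shift_poly by blast
  have "{l. \<exists>x. x \<noteq> 0 \<and> M *v x = l *s x} \<subseteq> {l. poly p l = 0}"
  proof safe
    fix l x assume "x \<noteq> 0" "M *v x = l *s x"
    then have "(mat l - M) *v x = 0"
      by (simp add: matrix_vector_mult_diff_rdistrib mat_mult_vec_scalar)
    then show "poly p l = 0" using kernel_det_zero[OF \<open>x \<noteq> 0\<close>] p(2) by metis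
  qed
  then show ?thesis using poly_roots_finite[OF p(1)] finite_subset by blast
qed


lemma nonneg_mv:
  fixes P :: "real^'n^'n"
  assumes "mat_nonneg P" "\<And>j. y $ j \<ge> 0"
  shows "(P *v y) $ i \<ge> 0"
  using assms unfolding mat_nonneg_def matrix_vector_mult_def by (auto intro!: sum_nonneg)

lemma mv_comp: "(P *v y) $ i = (\<Sum>j\<in>UNIV. P $ i $ j * y $ j)"
  by (simp add: matrix_vector_mult_def)

lemma mono_mv:
  fixes P :: "real^'n^'n"
  assumes "mat_nonneg P" "\<And>j. y $ j \<le> x $ j"
  shows "(P *v y) $ i \<le> (P *v x) $ i"
proof -
  have "(P *v (x - y)) $ i \<ge> 0" by (rule nonneg_mv) (use assms in auto)
  then show ?thesis by (simp add: matrix_vector_mult_diff_distrib)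
qed

lemma cw_upper:
  fixes P :: "real^'n^'n"
  assumes P: "mat_nonneg P" and z: "\<And>i. z $ i > 0"
    and d: "\<And>i. (P *v z) $ i \<le> d * z $ i"
    and x: "x \<noteq> 0" and eig: "(\<chi> i j. complex_of_real (P $ i $ j)) *v x = l *s x"
  shows "cmod l \<le> d"
proof -
  obtain i where imax: "\<And>j. cmod (x $ j) / z $ j \<le> cmod (x $ i) / z $ i"
    using exists_max_index[of "\<lambda>j. cmod (x $ j) / z $ j"] by blast
  define m where "m = cmod (x $ i) / z $ i"
  obtain k where "x $ k \<noteq> 0" using x by (metis vec_eq_iff zero_index)
  then have "cmod (x $ k) / z $ k > 0" using z[of k] by simp
  then have m0: "m > 0" using imax[of k] unfolding m_def by linarith
  have xj: "cmod (x $ j) \<le> m * z $ j" for j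
    using imax[of j] z[of j] unfolding m_def by (simp add: divide_le_eq)
  have xi: "cmod (x $ i) = m * z $ i" unfolding m_def using z[of i] by simp
  have e: "l * x $ i = (\<Sum>j\<in>UNIV. complex_of_real (P $ i $ j) * x $ j)"
    using arg_cong[OF eig, of "\<lambda>v. v $ i"] by (simp add: matrix_vector_mult_def)
  have "cmod l * (m * z $ i) = cmod (\<Sum>j\<in>UNIV. complex_of_real (P $ i $ j) * x $ j)"
    by (simp add: e[symmetric] norm_mult xi)
  also have "\<dots> \<le> (\<Sum>j\<in>UNIV. cmod (complex_of_real (P $ i $ j) * x $ j))" by (rule norm_sum)
  also have "\<dots> = (\<Sum>j\<in>UNIV. P $ i $ j * cmod (x $ j))"
    using P unfolding mat_nonneg_def by (simp add: norm_mult)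
  also have "\<dots> \<le> (\<Sum>j\<in>UNIV. P $ i $ j * (m * z $ j))"
    using P unfolding mat_nonneg_def by (intro sum_mono mult_left_mono xj) auto
  also have "\<dots> = m * (P *v z) $ i"
    by (simp add: mv_comp sum_distrib_left mult_ac)
  also have "\<dots> \<le> m * (d * z $ i)" using d[of i] m0 by simp
  finally have "cmod l * (m * z $ i) \<le> d * (m * z $ i)" by (simp add: mult_ac)
  moreover have "m * z $ i > 0" using m0 z[of i] by simp
  ultimately show ?thesis using mult_le_cancel_right_pos by blast
qed

lemma cont_if_const [continuous_intros]:
  "continuous_on S f \<Longrightarrow> continuous_on S g \<Longrightarrow> continuous_on S (\<lambda>x. if b then f x else g x)"
  by (cases b) auto

lemma continuous_on_det:
  fixes f :: "real \<Rightarrow> real^'n^'n"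
  assumes "\<And>i j. continuous_on S (\<lambda>t. f t $ i $ j)"
  shows "continuous_on S (\<lambda>t. det (f t))"
  unfolding det_def by (intro continuous_intros assms)

lemma continuous_on_Min_fin:
  fixes g :: "'k \<Rightarrow> real \<Rightarrow> real"
  assumes "finite K" "K \<noteq> {}" "\<And>k. k \<in> K \<Longrightarrow> continuous_on S (g k)"
  shows "continuous_on S (\<lambda>t. Min ((\<lambda>k. g k t) ` K))"
  using assms
proof (induction K rule: finite_ne_induct)
  case (singleton x)
  then show ?case by simp
next
  case (insert x F)
  have "continuous_on S (\<lambda>t. min (g x t) (Min ((\<lambda>k. g k t) ` F)))"
    using insert by (intro continuous_on_min) auto
  moreover have "Min ((\<lambda>k. g k t) ` insert x F) = min (g x t) (Min ((\<lambda>k. g k t) ` F))" for t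
    using insert by (simp add: Min_insert)
  ultimately show ?case by simp
qed

lemma real_eig_ge:
  fixes P :: "real^'n^'n"
  assumes P: "mat_nonneg P" and z: "\<And>i. z $ i > 0"
    and c: "\<And>i. c * z $ i \<le> (P *v z) $ i"
  shows "\<exists>t x. t \<ge> c \<and> x \<noteq> 0 \<and> P *v x = t *\<^sub>R x"
proof (rule ccontr)
  assume H: "\<not> ?thesis"
  define D where "D t = mat t - P" for t
  have Dcomp: "(D t *v x) $ k = t * x $ k - (P *v x) $ k" for t x k
    unfolding D_def by (simp add: matrix_vector_mult_diff_rdistrib mat_mult_vec_scalar)
  have inv: "det (D t) \<noteq> 0" if "t \<ge> c" for t
  proof
    assume "det (D t) = 0"
    then obtain x where "x \<noteq> 0" "D t *v x = 0" using det_zero_kernel by blast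
    then have "P *v x = t *\<^sub>R x" using Dcomp[of t x] by (simp add: vec_eq_iff)
    then show False using H that \<open>x \<noteq> 0\<close> by blast
  qed
  define X where "X t = (\<chi> k. det (\<chi> i j. if j = k then z $ i else D t $ i $ j) / det (D t))" for t
  have sol: "D t *v X t = z" if "t \<ge> c" for t
    using cramer[OF inv[OF that], of "X t" z] unfolding X_def by simp
  have pos: "x $ k > 0" if "D t *v x = z" "\<And>k. x $ k \<ge> 0" for t x k
  proof (rule ccontr)
    assume "\<not> x $ k > 0"
    then have "x $ k = 0" using that(2)[of k] by simp
    moreover have "(P *v x) $ k \<ge> 0" by (rule nonneg_mv[OF P that(2)])
    ultimately have "(D t *v x) $ k \<le> 0" using Dcomp[of t x k] by simp
    then show False using that(1) z[of k] by simp
  qed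
  define T where "T = \<bar>c\<bar> + 1 + (\<Sum>i\<in>UNIV. (P *v z) $ i / z $ i)"
  have rat0: "(P *v z) $ i / z $ i \<ge> 0" for i
  proof -
    have "(P *v z) $ i \<ge> 0" by (rule nonneg_mv[OF P]) (simp add: z less_imp_le)
    then show ?thesis using z[of i] by simp
  qed
  have Tc: "T > c" unfolding T_def using sum_nonneg[of UNIV "\<lambda>i. (P *v z) $ i / z $ i"] rat0 by auto
  have Tz: "(P *v z) $ i < T * z $ i" for i
  proof -
    have "(P *v z) $ i / z $ i \<le> (\<Sum>i\<in>UNIV. (P *v z) $ i / z $ i)"
      by (rule member_le_sum) (auto simp: rat0)
    then have "(P *v z) $ i / z $ i < T" unfolding T_def by linarith
    then show ?thesis using z[of i] by (simp add: divide_less_eq)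
  qed
  have XT: "X T $ k > 0" for k
  proof -
    obtain i where imin: "\<And>j. X T $ i / z $ i \<le> X T $ j / z $ j"
      using exists_min_index[of "\<lambda>j. X T $ j / z $ j"] by blast
    define b where "b = X T $ i / z $ i"
    have bz: "b * z $ j \<le> X T $ j" for j using imin[of j] z[of j] unfolding b_def
      by (simp add: le_divide_eq)
    have "(P *v (b *\<^sub>R z)) $ i \<le> (P *v X T) $ i" by (rule mono_mv[OF P]) (use bz in simp)
    then have "b * (P *v z) $ i \<le> (P *v X T) $ i" by (simp add: matrix_vector_mult_scaleR)
    moreover have "T * X T $ i - (P *v X T) $ i = z $ i"
      using sol[of T] Tc Dcomp[of T "X T" i] by simp
    moreover have "X T $ i = b * z $ i" unfolding b_def using z[of i] by simp
    ultimately have "b * (T * z $ i - (P *v z) $ i) \<ge> z $ i" by (simp add: algebra_simps)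
    moreover have "T * z $ i - (P *v z) $ i > 0" using Tz[of i] by simp
    ultimately have "b > 0" using z[of i]
      by (metis less_le_not_le mult_nonpos_nonneg not_le order_le_less_trans)
    then have "b * z $ k > 0" using z[of k] by simp
    then show ?thesis using bz[of k] by simp
  qed
  have Xc: "\<not> (\<forall>k. X c $ k > 0)"
  proof
    assume Xp: "\<forall>k. X c $ k > 0"
    obtain i where imin: "\<And>j. X c $ i / z $ i \<le> X c $ j / z $ j"
      using exists_min_index[of "\<lambda>j. X c $ j / z $ j"] by blast
    define a where "a = X c $ i / z $ i"
    have a0: "a \<ge> 0" unfolding a_def using Xp z[of i] by (simp add: less_imp_le)
    have az: "a * z $ j \<le> X c $ j" for j using imin[of j] z[of j] unfolding a_def
      by (simp add: le_divide_eq)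
    have "(P *v (a *\<^sub>R z)) $ i \<le> (P *v X c) $ i" by (rule mono_mv[OF P]) (use az in simp)
    then have "a * (P *v z) $ i \<le> (P *v X c) $ i" by (simp add: matrix_vector_mult_scaleR)
    moreover have "a * (c * z $ i) \<le> a * (P *v z) $ i" using c[of i] a0 by (simp add: mult_left_mono)
    moreover have "c * X c $ i - (P *v X c) $ i = z $ i"
      using sol[of c] Dcomp[of c "X c" i] by simp
    moreover have "X c $ i = a * z $ i" unfolding a_def using z[of i] by simp
    ultimately have "z $ i \<le> 0" by (simp add: algebra_simps)
    then show False using z[of i] by simp
  qed
  define h where "h t = Min ((\<lambda>k. X t $ k) ` UNIV)" for t
  have hc: "h c \<le> 0"
  proof -
    obtain k where "X c $ k \<le> 0" using Xc by (meson not_le)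
    moreover have "h c \<le> X c $ k" unfolding h_def by (rule Min_le) auto
    ultimately show ?thesis by simp
  qed
  have hT: "h T > 0" unfolding h_def using XT by (subst Min_gr_iff) auto
  have cont: "continuous_on {c..T} h"
    unfolding h_def
  proof (rule continuous_on_Min_fin)
    fix k :: 'n
    show "continuous_on {c..T} (\<lambda>t. X t $ k)"
      unfolding X_def vec_lambda_beta
    proof (rule continuous_on_divide)
      show "continuous_on {c..T} (\<lambda>t. det (\<chi> i j. if j = k then z $ i else D t $ i $ j))"
        by (rule continuous_on_det) (auto simp: D_def mat_def intro!: continuous_intros)
      show "continuous_on {c..T} (\<lambda>t. det (D t))"
        by (rule continuous_on_det) (auto simp: D_def mat_def intro!: continuous_intros)
      show "\<forall>t\<in>{c..T}. det (D t) \<noteq> 0" using inv by auto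
    qed
  qed auto
  obtain t where t: "c \<le> t" "t \<le> T" "h t = 0"
    using IVT'[of h c 0 T, OF hc _ _ cont] hT Tc by auto
  have "X t $ k \<ge> 0" for k
  proof -
    have "h t \<le> X t $ k" unfolding h_def by (rule Min_le) auto
    then show ?thesis using t by simp
  qed
  then have "X t $ k > 0" for k using pos[OF sol[OF t(1)]] by blast
  then have "h t > 0" unfolding h_def by (subst Min_gr_iff) auto
  then show False using t by simp
qed

lemma cw_bounds:
  fixes P :: "real^'n^'n"
  assumes P: "mat_nonneg P" and z: "\<And>i. z $ i > 0"
    and c: "\<And>i. c * z $ i \<le> (P *v z) $ i"
    and d: "\<And>i. (P *v z) $ i \<le> d * z $ i"
  shows "c \<le> spectral_radius P \<and> spectral_radius P \<le> d"
proof -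
  define E where "E = {l. \<exists>x::complex^'n. x \<noteq> 0 \<and> (\<chi> i j. complex_of_real (P $ i $ j)) *v x = l *s x}"
  have SE: "{cmod l | l. \<exists>x::complex^'n. x \<noteq> 0 \<and> (\<chi> i j. complex_of_real (P $ i $ j)) *v x = l *s x} = cmod ` E"
    unfolding E_def by auto
  have fin: "finite (cmod ` E)" unfolding E_def by (intro finite_imageI eigenvalues_finite)
  obtain t x where tx: "t \<ge> c" "x \<noteq> 0" "P *v x = t *\<^sub>R x" using real_eig_ge[OF P z c] by blast
  define xc where "xc = (\<chi> i. complex_of_real (x $ i))"
  have "xc \<noteq> 0"
  proof
    assume "xc = 0"
    then have "complex_of_real (x $ i) = 0" for i unfolding xc_def by (metis vec_lambda_beta zero_index)
    then have "x $ i = 0" for i by simp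
    then show False using tx(2) by (simp add: vec_eq_iff)
  qed
  moreover have "(\<chi> i j. complex_of_real (P $ i $ j)) *v xc = complex_of_real t *s xc"
  proof -
    have "(P *v x) $ i = t * x $ i" for i using tx(3) by simp
    then show ?thesis unfolding xc_def
      by (simp add: vec_eq_iff matrix_vector_mult_def mv_comp flip: of_real_mult of_real_sum)
  qed
  ultimately have tE: "complex_of_real t \<in> E" unfolding E_def by blast
  have "c \<le> cmod (complex_of_real t)" using tx(1) by simp
  also have "\<dots> \<le> Max (cmod ` E)" using fin tE by (intro Max_ge) (auto simp del: norm_of_real)
  finally have lo: "c \<le> Max (cmod ` E)" .
  have "Max (cmod ` E) \<le> d"
    using fin tE by (subst Max_le_iff) (auto simp: E_def intro: cw_upper[OF P z d])
  then show ?thesis using lo unfolding spectral_radius_def SE by simp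
qed

lemma mm_add_r: "((A::'a::semiring_1^'n^'m) + B) ** C = A ** C + B ** C"
  by (simp add: matrix_matrix_mult_def vec_eq_iff distrib_right sum.distrib)
lemma mm_diff_r: "((A::'a::ring_1^'n^'m) - B) ** C = A ** C - B ** C"
  by (simp add: matrix_matrix_mult_def vec_eq_iff left_diff_distrib sum_subtractf)
lemma mm_diff_l: "(A::'a::ring_1^'n^'m) ** (B - C) = A ** B - A ** C"
  by (simp add: matrix_matrix_mult_def vec_eq_iff right_diff_distrib sum_subtractf)
lemma mm_comp: "((A::'a::semiring_1^'n^'m) ** B) $ i $ j = (\<Sum>l\<in>UNIV. A $ i $ l * B $ l $ j)"
  by (simp add: matrix_matrix_mult_def)
lemma mat1_comp: "(mat 1 :: 'a::zero_neq_one^'n^'n) $ i $ j = (if i = j then 1 else 0)"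
  by (simp add: mat_def)
lemma ones_comp [simp]: "ones $ i = 1" by (simp add: ones_def)

lemma bl_mult_right: "bounded_linear (\<lambda>X::real^'n^'m. X ** C)"
  unfolding linear_conv_bounded_linear[symmetric]
  by (rule linearI) (simp_all add: mm_add_r scalar_matrix_assoc)
lemma bl_mult_left: "bounded_linear (\<lambda>X::real^'n^'m. C ** X)"
  unfolding linear_conv_bounded_linear[symmetric]
  by (rule linearI) (simp_all add: matrix_add_ldistrib matrix_scalar_ac scalar_matrix_assoc)
lemma bl_mv: "bounded_linear (\<lambda>X::real^'n^'m. X *v x)"
  unfolding linear_conv_bounded_linear[symmetric]
  by (rule linearI) (simp_all add: matrix_vector_mult_add_rdistrib vec_eq_iff matrix_vector_mult_def sum_distrib_left mult.assoc distrib_right sum.distrib)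
lemma bl_vm: "bounded_linear (\<lambda>x::real^'m. x v* M)"
  unfolding linear_conv_bounded_linear[symmetric]
  by (rule linearI) (simp_all add: vector_matrix_left_distrib scaleR_vector_matrix_assoc)

lemma sums_vec_lambda:
  assumes "\<And>i. (\<lambda>k. g k i) sums s i"
  shows "(\<lambda>k. \<chi> i. g k i) sums (\<chi> i. s i)"
proof -
  have "(\<lambda>n. \<chi> i. \<Sum>k<n. g k i) \<longlonglongrightarrow> (\<chi> i. s i)"
    using assms unfolding sums_def by (intro tendsto_vec_lambda) auto
  moreover have "(\<Sum>k<n. \<chi> i. g k i) = (\<chi> i. \<Sum>k<n. g k i)" for n
    by (simp add: vec_eq_iff)
  ultimately show ?thesis unfolding sums_def by simp
qed

lemma summable_entries:
  fixes f :: "nat \<Rightarrow> real^'n^'m"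
  assumes "\<And>i j. summable (\<lambda>k. f k $ i $ j)"
  shows "summable f"
proof -
  have "(\<lambda>k. \<chi> i. \<chi> j. f k $ i $ j) sums (\<chi> i. \<chi> j. suminf (\<lambda>k. f k $ i $ j))"
    by (intro sums_vec_lambda) (use assms in \<open>auto intro: summable_sums\<close>)
  then show ?thesis by (auto simp: summable_def)
qed

lemma summable_entries_vec:
  fixes f :: "nat \<Rightarrow> real^'n"
  assumes "\<And>i. summable (\<lambda>k. f k $ i)"
  shows "summable f"
proof -
  have "(\<lambda>k. \<chi> i. f k $ i) sums (\<chi> i. suminf (\<lambda>k. f k $ i))"
    by (intro sums_vec_lambda) (use assms in \<open>auto intro: summable_sums\<close>)
  then show ?thesis by (auto simp: summable_def)
qed

lemma suminf_entry:
  fixes f :: "nat \<Rightarrow> real^'n^'m"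
  assumes "summable f"
  shows "suminf f $ i $ j = (\<Sum>k. f k $ i $ j)"
  using sums_vec_nth[OF sums_vec_nth[OF summable_sums[OF assms]], of i j] by (simp add: sums_iff)

lemma summable_entry:
  fixes f :: "nat \<Rightarrow> real^'n^'m"
  assumes "summable f"
  shows "summable (\<lambda>k. f k $ i $ j)"
  using summable_vec_nth[OF summable_vec_nth[OF assms]] .

lemma mat_nonneg_mult: "mat_nonneg A \<Longrightarrow> mat_nonneg B \<Longrightarrow> mat_nonneg (A ** B)"
  unfolding mat_nonneg_def by (auto simp: mm_comp intro!: sum_nonneg)
lemma mat_nonneg_add: "mat_nonneg A \<Longrightarrow> mat_nonneg B \<Longrightarrow> mat_nonneg (A + B)"
  unfolding mat_nonneg_def by (auto intro: add_nonneg_nonneg)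
lemma mat_nonneg_one: "mat_nonneg (mat 1 :: real^'n^'n)"
  unfolding mat_nonneg_def by (simp add: mat1_comp)
lemma mat_nonneg_matpow: "mat_nonneg M \<Longrightarrow> mat_nonneg (matpow M k)"
  by (induction k) (auto simp: mat_nonneg_one mat_nonneg_mult)
lemma mat_nonneg_sum: "(\<And>j. j \<in> S \<Longrightarrow> mat_nonneg (f j)) \<Longrightarrow> mat_nonneg (sum f S)"
  unfolding mat_nonneg_def by (auto simp: sum_component intro!: sum_nonneg)

lemma mat_le_mult:
  assumes "mat_nonneg A" "mat_nonneg B" "mat_le A A'" "mat_le B B'"
  shows "mat_le (A ** B) (A' ** B')"
  using assms unfolding mat_le_def mat_nonneg_def
  by (auto simp: mm_comp intro!: sum_mono mult_mono) (meson order_trans)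

lemma mat_le_matpow:
  assumes "mat_nonneg A" "mat_le A B"
  shows "mat_le (matpow A k) (matpow B k)"
proof (induction k)
  case 0 then show ?case by (simp add: mat_le_def)
next
  case (Suc k)
  then show ?case using mat_le_mult[OF assms(1) mat_nonneg_matpow[OF assms(1)] assms(2) Suc] by simp
qed

lemma matpow_comm: "matpow M k ** M = M ** matpow M k"
  by (induction k) (simp_all add: matrix_mul_assoc[symmetric])

lemma matpow_vec_le:
  assumes "mat_nonneg M" "\<And>i. (M *v x) $ i \<le> x $ i"
  shows "(matpow M k *v x) $ i \<le> x $ i"
proof (induction k arbitrary: i)
  case 0 then show ?case by simp
next
  case (Suc k)
  have "(matpow M (Suc k) *v x) $ i = (M *v (matpow M k *v x)) $ i"
    by (simp add: matrix_vector_mul_assoc)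
  also have "\<dots> \<le> (M *v x) $ i" by (rule mono_mv[OF assms(1)]) (use Suc in auto)
  also have "\<dots> \<le> x $ i" by (rule assms(2))
  finally show ?case .
qed

lemma matpow_vec_eq:
  assumes "M *v x = x"
  shows "matpow M k *v x = x"
  by (induction k) (simp_all add: assms flip: matrix_vector_mul_assoc)

lemma entry_le_rowsum:
  assumes "mat_nonneg M"
  shows "M $ i $ j \<le> (M *v ones) $ i"
  using assms unfolding mat_nonneg_def by (simp add: mv_comp member_le_sum)

lemma geom_telescope:
  fixes G :: "real^'n^'n"
  shows "(\<Sum>j\<le>n. matpow G j) ** (mat 1 - G) = mat 1 - matpow G (Suc n)"
proof (induction n)
  case 0 then show ?case by simp
next
  case (Suc n)
  have "(\<Sum>j\<le>Suc n. matpow G j) ** (mat 1 - G) =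
      (\<Sum>j\<le>n. matpow G j) ** (mat 1 - G) + matpow G (Suc n) ** (mat 1 - G)"
    by (simp add: mm_add_r)
  also have "\<dots> = mat 1 - matpow G (Suc (Suc n))"
    using Suc by (simp add: mm_diff_l matrix_mul_assoc[symmetric] matpow_comm)
  finally show ?case .
qed

lemma matrix_inv_props:
  fixes M :: "real^'n^'n"
  assumes "inj ((*v) M)"
  shows "M ** matrix_inv M = mat 1 \<and> matrix_inv M ** M = mat 1"
proof -
  have "det M \<noteq> 0"
    using det_nz_iff_inj_gen[OF matrix_vector_mul_linear_gen[of M]] assms
    by (simp add: matrix_of_matrix_vector_mul)
  then have "invertible M" by (simp add: invertible_det_nz)
  then show ?thesis unfolding invertible_def matrix_inv_def by (rule someI_ex)
qed

lemma irred_closed: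
  fixes M :: "real^'n^'n"
  assumes irr: "irreducible_mat M" and nn: "mat_nonneg M" and a: "a \<in> S"
    and cl: "\<And>p q. p \<in> S \<Longrightarrow> M $ p $ q > 0 \<Longrightarrow> q \<in> S"
  shows "j \<in> S"
proof -
  have step: "p \<in> S \<Longrightarrow> matpow M k $ p $ j > 0 \<Longrightarrow> j \<in> S" for k p
  proof (induction k arbitrary: p)
    case 0 then show ?case by (auto simp: mat1_comp split: if_splits)
  next
    case (Suc k)
    have "0 < (\<Sum>l\<in>UNIV. M $ p $ l * matpow M k $ l $ j)"
      using Suc.prems(2) by (simp add: mm_comp)
    have "\<exists>l. M $ p $ l * matpow M k $ l $ j > 0"
    proof (rule ccontr)
      assume "\<not> ?thesis"
      then have "(\<Sum>l\<in>UNIV. M $ p $ l * matpow M k $ l $ j) \<le> 0"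
        by (intro sum_nonpos) (simp add: not_less)
      then show False using \<open>0 < (\<Sum>l\<in>UNIV. M $ p $ l * matpow M k $ l $ j)\<close> by simp
    qed
    then obtain l where l: "M $ p $ l * matpow M k $ l $ j > 0" by blast
    have "M $ p $ l \<ge> 0" "matpow M k $ l $ j \<ge> 0"
      using nn mat_nonneg_matpow[OF nn, of k] unfolding mat_nonneg_def by auto
    with l have "M $ p $ l > 0" "matpow M k $ l $ j > 0"
      by (auto simp: zero_less_mult_iff)
    then show ?case using Suc.IH cl Suc.prems(1) by blast
  qed
  obtain k where "k > 0" "matpow M k $ a $ j > 0" using irr unfolding irreducible_mat_def by blast
  then show ?thesis using step a by blast
qed

lemma maxprin:
  fixes B M :: "real^'n^'n"
  assumes B: "mat_nonneg B" and BM: "mat_le B M" and M: "mat_nonneg M"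
    and Me: "M *v ones = ones" and irr: "irreducible_mat M"
    and y: "\<And>i. y $ i \<le> (B *v y) $ i" and y0: "y $ i0 > 0"
  shows "B = M"
proof -
  obtain m where m: "\<And>j. y $ j \<le> y $ m" using exists_max_index[of "\<lambda>j. y $ j"] by blast
  define Mx where "Mx = y $ m"
  have Mx0: "Mx > 0" using m[of i0] y0 unfolding Mx_def by simp
  define S where "S = {p. y $ p = Mx}"
  have rowsum: "(\<Sum>l\<in>UNIV. M $ p $ l) = 1" for p
    using arg_cong[OF Me, of "\<lambda>v. v $ p"] by (simp add: mv_comp)
  have key: "(\<forall>l. B $ p $ l = M $ p $ l) \<and> (\<forall>l. B $ p $ l > 0 \<longrightarrow> y $ l = Mx)" if "p \<in> S" for p
  proof -
    have yp: "y $ p = Mx" using that unfolding S_def by simp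
    have Bn: "\<And>l. B $ p $ l \<ge> 0" using B unfolding mat_nonneg_def by auto
    have BMl: "\<And>l. B $ p $ l \<le> M $ p $ l" using BM unfolding mat_le_def by auto
    have s1: "Mx \<le> (\<Sum>l\<in>UNIV. B $ p $ l * y $ l)" using y[of p] yp by (simp add: mv_comp)
    have s2: "(\<Sum>l\<in>UNIV. B $ p $ l * y $ l) \<le> (\<Sum>l\<in>UNIV. B $ p $ l * Mx)"
      by (intro sum_mono mult_left_mono) (auto simp: Bn m Mx_def)
    have s3: "(\<Sum>l\<in>UNIV. B $ p $ l) \<le> (\<Sum>l\<in>UNIV. M $ p $ l)" by (intro sum_mono BMl)
    have "(\<Sum>l\<in>UNIV. B $ p $ l * Mx) = (\<Sum>l\<in>UNIV. B $ p $ l) * Mx" by (simp add: sum_distrib_right)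
    with s1 s2 have "Mx \<le> (\<Sum>l\<in>UNIV. B $ p $ l) * Mx" by simp
    then have "1 \<le> (\<Sum>l\<in>UNIV. B $ p $ l)" using Mx0 by (simp add: mult_le_cancel_right1)
    with s3 rowsum[of p] have eq1: "(\<Sum>l\<in>UNIV. B $ p $ l) = 1" by linarith
    then have "(\<Sum>l\<in>UNIV. M $ p $ l - B $ p $ l) = 0" using rowsum[of p] by (simp add: sum_subtractf)
    then have r1: "\<forall>l. B $ p $ l = M $ p $ l"
      using sum_nonneg_eq_0_iff[of UNIV "\<lambda>l. M $ p $ l - B $ p $ l"] BMl by auto
    have "(\<Sum>l\<in>UNIV. B $ p $ l * Mx) = Mx" using eq1 by (simp add: sum_distrib_right[symmetric])
    then have "(\<Sum>l\<in>UNIV. B $ p $ l * (Mx - y $ l)) = 0"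
      using s1 s2 by (simp add: right_diff_distrib sum_subtractf)
    moreover have "\<forall>l. B $ p $ l * (Mx - y $ l) \<ge> 0" using Bn m unfolding Mx_def by simp
    ultimately have "\<forall>l. B $ p $ l * (Mx - y $ l) = 0"
      using sum_nonneg_eq_0_iff[of UNIV "\<lambda>l. B $ p $ l * (Mx - y $ l)"] by auto
    then have "\<forall>l. B $ p $ l > 0 \<longrightarrow> y $ l = Mx"
    proof (intro allI impI)
      fix l assume z: "\<forall>l. B $ p $ l * (Mx - y $ l) = 0" and "B $ p $ l > 0"
      have "B $ p $ l * (Mx - y $ l) = 0" by (rule spec[OF z])
      then have "Mx - y $ l = 0" using \<open>B $ p $ l > 0\<close> by simp
      then show "y $ l = Mx" by simp
    qed
    with r1 show ?thesis by blast
  qed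
  have allS: "j \<in> S" for j
  proof (rule irred_closed[OF irr M])
    show "m \<in> S" unfolding S_def Mx_def by simp
    fix p q assume pq: "p \<in> S" "0 < M $ p $ q"
    have k1: "B $ p $ q = M $ p $ q" using key[OF pq(1)] by blast
    have k2: "B $ p $ q > 0 \<longrightarrow> y $ q = Mx" using key[OF pq(1)] by blast
    have "y $ q = Mx" using k1 k2 pq(2) by simp
    then show "q \<in> S" unfolding S_def by simp
  qed
  have "B $ p $ l = M $ p $ l" for p l using key[OF allS[of p]] by blast
  then show ?thesis by (simp add: vec_eq_iff)
qed

lemma inj_of_kernel:
  fixes N :: "real^'n^'n"
  assumes "\<And>x. N *v x = 0 \<Longrightarrow> x = 0"
  shows "inj ((*v) N)"
  unfolding inj_def using assms by (metis eq_iff_diff_eq_0 matrix_vector_mult_diff_distrib)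

lemma inv_nonneg:
  fixes B M :: "real^'n^'n"
  assumes B: "mat_nonneg B" and BM: "mat_le B M" and M: "mat_nonneg M"
    and Me: "M *v ones = ones" and irr: "irreducible_mat M" and ne: "B \<noteq> M"
  shows "(mat 1 - B) ** matrix_inv (mat 1 - B) = mat 1"
    and "matrix_inv (mat 1 - B) ** (mat 1 - B) = mat 1"
    and "mat_nonneg (matrix_inv (mat 1 - B))"
proof -
  have comp: "((mat 1 - B) *v x) $ i = x $ i - (B *v x) $ i" for x i
    by (simp add: matrix_vector_mult_diff_rdistrib)
  have "inj ((*v) (mat 1 - B))"
  proof (rule inj_of_kernel)
    fix x assume x: "(mat 1 - B) *v x = 0"
    define y where "y = (\<chi> i. \<bar>x $ i\<bar>)"
    have yB: "y $ i \<le> (B *v y) $ i" for i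
    proof -
      have "x $ i = (B *v x) $ i" using arg_cong[OF x, of "\<lambda>v. v $ i"] comp[of x i] by simp
      then have "\<bar>x $ i\<bar> = \<bar>\<Sum>j\<in>UNIV. B $ i $ j * x $ j\<bar>" by (simp add: mv_comp)
      also have "\<dots> \<le> (\<Sum>j\<in>UNIV. \<bar>B $ i $ j * x $ j\<bar>)" by (rule sum_abs)
      also have "\<dots> = (B *v y) $ i" using B unfolding mat_nonneg_def y_def
        by (simp add: mv_comp abs_mult)
      finally show ?thesis unfolding y_def by simp
    qed
    show "x = 0"
    proof (rule ccontr)
      assume "x \<noteq> 0"
      then obtain i where "x $ i \<noteq> 0" by (metis vec_eq_iff zero_index)
      then have "y $ i > 0" unfolding y_def by simp
      then have "B = M" by (rule maxprin[OF B BM M Me irr yB])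
      then show False using ne by simp
    qed
  qed
  from matrix_inv_props[OF this]
  show i1: "(mat 1 - B) ** matrix_inv (mat 1 - B) = mat 1"
    and i2: "matrix_inv (mat 1 - B) ** (mat 1 - B) = mat 1" by auto
  show "mat_nonneg (matrix_inv (mat 1 - B))"
    unfolding mat_nonneg_def
  proof (intro allI)
    fix i j
    define b :: "real^'n" where "b = axis j 1"
    define x where "x = matrix_inv (mat 1 - B) *v b"
    have xb: "(mat 1 - B) *v x = b" unfolding x_def by (simp add: matrix_vector_mul_assoc i1)
    have bn: "b $ k \<ge> 0" for k unfolding b_def by (simp add: axis_def)
    have xk: "x $ k \<ge> 0" for k
    proof (rule ccontr)
      assume "\<not> x $ k \<ge> 0"
      define y where "y = - x"
      have yB: "y $ l \<le> (B *v y) $ l" for l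
      proof -
        have "x $ l - (B *v x) $ l = b $ l" using arg_cong[OF xb, of "\<lambda>v. v $ l"] comp[of x l] by simp
        moreover have "B *v (- x) = - (B *v x)" by (simp add: vec_eq_iff mv_comp sum_negf)
        ultimately show ?thesis using bn[of l] unfolding y_def by simp
      qed
      moreover have "y $ k > 0" using \<open>\<not> x $ k \<ge> 0\<close> unfolding y_def by simp
      ultimately have "B = M" by (rule maxprin[OF B BM M Me irr])
      then show False using ne by simp
    qed
    have xi: "x $ i = matrix_inv (mat 1 - B) $ i $ j"
      unfolding x_def b_def by (simp add: mv_comp axis_def if_distrib cong: if_cong)
    show "matrix_inv (mat 1 - B) $ i $ j \<ge> 0" using xk[of i] unfolding xi .
  qed
qed

lemma mat_le_refl: "mat_le A A" by (simp add: mat_le_def)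

lemma suminf_vec_entry:
  fixes f :: "nat \<Rightarrow> real^'n"
  assumes "summable f"
  shows "suminf f $ i = (\<Sum>k. f k $ i)"
  using sums_vec_nth[OF summable_sums[OF assms], of i] by (simp add: sums_iff)

lemma conv_mult:
  fixes f g :: "nat \<Rightarrow> real^'n^'n"
  assumes "\<And>i j. (\<lambda>m. f m $ i $ j) \<longlonglongrightarrow> F $ i $ j" "\<And>i j. (\<lambda>m. g m $ i $ j) \<longlonglongrightarrow> H $ i $ j"
  shows "(\<lambda>m. (f m ** g m) $ i $ j) \<longlonglongrightarrow> (F ** H) $ i $ j"
  unfolding mm_comp by (intro tendsto_sum tendsto_mult assms)

lemma conv_matpow:
  fixes f :: "nat \<Rightarrow> real^'n^'n"
  assumes "\<And>i j. (\<lambda>m. f m $ i $ j) \<longlonglongrightarrow> F $ i $ j"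
  shows "(\<lambda>m. matpow (f m) k $ i $ j) \<longlonglongrightarrow> matpow F k $ i $ j"
proof (induction k arbitrary: i j)
  case 0 then show ?case by simp
next
  case (Suc k) then show ?case by (simp add: conv_mult assms)
qed

lemma minimal_sub:
  fixes a :: "nat \<Rightarrow> real^'n^'n" and G Asum :: "real^'n^'n"
  assumes an: "\<And>k. mat_nonneg (a k)" and asum: "a sums Asum" and Ae: "Asum *v ones = ones"
    and Gn: "mat_nonneg G" and Gs: "(\<lambda>k. a k ** matpow G k) sums G"
    and Gmin: "\<And>X. mat_nonneg X \<Longrightarrow> (\<lambda>k. a k ** matpow X k) sums X \<Longrightarrow> mat_le G X"
  shows "(G *v ones) $ i \<le> 1"
proof -
  define F where "F X = suminf (\<lambda>k. a k ** matpow X k)" for X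
  have nnpow: "mat_nonneg (a k ** matpow X k)" if "mat_nonneg X" for X k
    by (intro mat_nonneg_mult an mat_nonneg_matpow that)
  have lepow: "mat_le (a k ** matpow X k) (a k ** matpow Y k)" if "mat_nonneg X" "mat_le X Y" for X Y k
    by (intro mat_le_mult an mat_nonneg_matpow mat_le_refl mat_le_matpow that)
  have summ: "summable (\<lambda>k. a k ** matpow X k)" if "mat_nonneg X" "mat_le X G" for X
  proof (rule summable_entries)
    fix i j
    have bnd: "summable (\<lambda>k. (a k ** matpow G k) $ i $ j)"
      using summable_entry[OF sums_summable[OF Gs]] .
    show "summable (\<lambda>k. (a k ** matpow X k) $ i $ j)"
    proof (rule summable_comparison_test'[OF bnd])
      fix k :: nat
      have "(a k ** matpow X k) $ i $ j \<ge> 0" using nnpow[OF that(1), of k] unfolding mat_nonneg_def by auto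
      moreover have "(a k ** matpow X k) $ i $ j \<le> (a k ** matpow G k) $ i $ j"
        using lepow[OF that, of k] unfolding mat_le_def by auto
      ultimately show "norm ((a k ** matpow X k) $ i $ j) \<le> (a k ** matpow G k) $ i $ j" by simp
    qed
  qed
  have Fent: "F X $ i $ j = (\<Sum>k. (a k ** matpow X k) $ i $ j)" if "mat_nonneg X" "mat_le X G" for X i j
    unfolding F_def by (rule suminf_entry[OF summ[OF that]])
  have Fnn: "mat_nonneg (F X)" if "mat_nonneg X" "mat_le X G" for X
    unfolding mat_nonneg_def
  proof (intro allI)
    fix i j
    show "F X $ i $ j \<ge> 0" unfolding Fent[OF that]
      by (rule suminf_nonneg[OF summable_entry[OF summ[OF that]]])
         (use nnpow[OF that(1)] in \<open>auto simp: mat_nonneg_def\<close>)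
  qed
  have Fmono: "mat_le (F X) (F Y)" if "mat_nonneg X" "mat_le X Y" "mat_le Y G" for X Y
  proof -
    have Yn: "mat_nonneg Y" using that unfolding mat_nonneg_def mat_le_def by (meson order_trans)
    have XG: "mat_le X G" using that unfolding mat_le_def by (meson order_trans)
    show ?thesis unfolding mat_le_def
    proof (intro allI)
      fix i j
      show "F X $ i $ j \<le> F Y $ i $ j" unfolding Fent[OF that(1) XG] Fent[OF Yn that(3)]
        by (rule suminf_le[OF _ summable_entry[OF summ[OF that(1) XG]] summable_entry[OF summ[OF Yn that(3)]]])
           (use lepow[OF that(1,2)] in \<open>auto simp: mat_le_def\<close>)
    qed
  qed
  have FG: "F G = G" unfolding F_def using sums_unique[OF Gs] by simp
  have Fe: "(F X *v ones) $ i \<le> 1" if "mat_nonneg X" "mat_le X G" "\<And>i. (X *v ones) $ i \<le> 1" for X i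
  proof -
    have s1: "summable (\<lambda>k. (a k ** matpow X k) *v ones)"
      by (rule bounded_linear.summable[OF bl_mv summ[OF that(1,2)]])
    have s2: "summable (\<lambda>k. a k *v ones)"
      by (rule bounded_linear.summable[OF bl_mv sums_summable[OF asum]])
    have "F X *v ones = (\<Sum>k. (a k ** matpow X k) *v ones)"
      unfolding F_def by (rule bounded_linear.suminf[OF bl_mv summ[OF that(1,2)]])
    then have "(F X *v ones) $ i = (\<Sum>k. ((a k ** matpow X k) *v ones) $ i)"
      using suminf_vec_entry[OF s1] by simp
    also have "\<dots> \<le> (\<Sum>k. (a k *v ones) $ i)"
    proof (rule suminf_le)
      fix k
      have "((a k ** matpow X k) *v ones) $ i = (a k *v (matpow X k *v ones)) $ i"
        by (simp add: matrix_vector_mul_assoc)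
      also have "\<dots> \<le> (a k *v ones) $ i"
        by (rule mono_mv[OF an]) (rule matpow_vec_le[OF that(1)], simp add: that(3))
      finally show "((a k ** matpow X k) *v ones) $ i \<le> (a k *v ones) $ i" .
    qed (use summable_vec_nth[OF s1] summable_vec_nth[OF s2] in auto)
    also have "\<dots> = (Asum *v ones) $ i"
    proof -
      have "Asum *v ones = (\<Sum>k. a k *v ones)"
        using bounded_linear.suminf[OF bl_mv sums_summable[OF asum]] sums_unique[OF asum] by simp
      then show ?thesis using suminf_vec_entry[OF s2] by simp
    qed
    also have "\<dots> = 1" using Ae by simp
    finally show ?thesis .
  qed
  define Xs where "Xs m = (F ^^ m) 0" for m
  have XsS: "Xs (Suc m) = F (Xs m)" for m unfolding Xs_def by simp
  have z0: "mat_nonneg (0::real^'n^'n)" "mat_le (0::real^'n^'n) G"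
    using Gn by (auto simp: mat_nonneg_def mat_le_def)
  have Inv: "mat_nonneg (Xs m) \<and> mat_le (Xs m) G \<and> (\<forall>i. (Xs m *v ones) $ i \<le> 1) \<and> mat_le (Xs m) (Xs (Suc m))" for m
  proof (induction m)
    case 0
    have "mat_nonneg (F 0)" by (rule Fnn[OF z0])
    then show ?case using z0 unfolding XsS by (simp add: Xs_def mat_nonneg_def mat_le_def)
  next
    case (Suc m)
    then have h: "mat_nonneg (Xs m)" "mat_le (Xs m) G" "\<And>i. (Xs m *v ones) $ i \<le> 1" "mat_le (Xs m) (Xs (Suc m))"
      by auto
    have n1: "mat_nonneg (Xs (Suc m))" unfolding XsS by (rule Fnn[OF h(1,2)])
    have l1: "mat_le (Xs (Suc m)) G" unfolding XsS using Fmono[OF h(1,2) mat_le_refl] FG by simp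
    have b1: "(Xs (Suc m) *v ones) $ i \<le> 1" for i unfolding XsS by (rule Fe[OF h(1,2,3)])
    have m1: "mat_le (Xs (Suc m)) (Xs (Suc (Suc m)))"
      unfolding XsS[of "Suc m"] unfolding XsS by (rule Fmono[OF h(1) h(4)[unfolded XsS] l1[unfolded XsS]])
    show ?case using n1 l1 b1 m1 by blast
  qed
  define L where "L = (\<chi> i j. Sup (range (\<lambda>m. Xs m $ i $ j)))"
  have inc: "incseq (\<lambda>m. Xs m $ i $ j)" for i j
    by (rule incseq_SucI) (use Inv in \<open>auto simp: mat_le_def\<close>)
  have bdd: "bdd_above (range (\<lambda>m. Xs m $ i $ j))" for i j
    by (rule bdd_aboveI[of _ "G $ i $ j"]) (use Inv in \<open>auto simp: mat_le_def\<close>)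
  have conv: "(\<lambda>m. Xs m $ i $ j) \<longlonglongrightarrow> L $ i $ j" for i j
    unfolding L_def using LIMSEQ_incseq_SUP[OF bdd inc] by simp
  have XL: "Xs m $ i $ j \<le> L $ i $ j" for m i j by (rule incseq_le[OF inc conv])
  have XLm: "mat_le (Xs m) L" for m unfolding mat_le_def using XL by blast
  have Ln: "mat_nonneg L" unfolding mat_nonneg_def
    using XL[of 0] by (simp add: Xs_def)
  have LG: "mat_le L G" unfolding mat_le_def
  proof (intro allI)
    fix i j show "L $ i $ j \<le> G $ i $ j"
      by (rule LIMSEQ_le_const2[OF conv]) (use Inv in \<open>auto simp: mat_le_def\<close>)
  qed
  have Le: "(L *v ones) $ i \<le> 1" for i
  proof -
    have "(\<lambda>m. \<Sum>j\<in>UNIV. Xs m $ i $ j) \<longlonglongrightarrow> (\<Sum>j\<in>UNIV. L $ i $ j)"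
      by (intro tendsto_sum conv)
    moreover have "(\<Sum>j\<in>UNIV. Xs m $ i $ j) \<le> 1" for m using Inv[of m] by (simp add: mv_comp)
    ultimately have "(\<Sum>j\<in>UNIV. L $ i $ j) \<le> 1" by (intro LIMSEQ_le_const2) auto
    then show ?thesis by (simp add: mv_comp)
  qed
  have FL: "F L = L"
  proof -
    have "F L $ i $ j = L $ i $ j" for i j
    proof -
      define b where "b k = (a k ** matpow L k) $ i $ j" for k
      define c where "c m k = (a k ** matpow (Xs m) k) $ i $ j" for m k
      have sb: "summable b" unfolding b_def by (rule summable_entry[OF summ[OF Ln LG]])
      have sc: "summable (c m)" for m unfolding c_def
        by (rule summable_entry[OF summ]) (use Inv in auto)
      have cb: "c m k \<le> b k" for m k unfolding c_def b_def
        using lepow[OF _ XLm, of m k] Inv[of m] unfolding mat_le_def by auto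
      have cn: "c m k \<ge> 0" for m k unfolding c_def
        using nnpow[of "Xs m" k] Inv[of m] unfolding mat_nonneg_def by auto
      have cc: "(\<lambda>m. c m k) \<longlonglongrightarrow> b k" for k unfolding c_def b_def
        by (rule conv_mult) (auto intro: conv_matpow conv)
      have sumc: "suminf (c m) = Xs (Suc m) $ i $ j" for m
        unfolding XsS c_def using Fent[of "Xs m" i j] Inv[of m] by simp
      have up: "L $ i $ j \<le> suminf b"
      proof (rule LIMSEQ_le_const2[OF LIMSEQ_Suc[OF conv]])
        show "\<exists>N. \<forall>m\<ge>N. Xs (Suc m) $ i $ j \<le> suminf b"
          using suminf_le[OF cb sc sb] sumc by auto
      qed
      have lo: "suminf b \<le> L $ i $ j"
      proof (rule suminf_le_const[OF sb])
        fix n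
        have "(\<lambda>m. \<Sum>k<n. c m k) \<longlonglongrightarrow> (\<Sum>k<n. b k)" by (intro tendsto_sum cc)
        moreover have "(\<Sum>k<n. c m k) \<le> L $ i $ j" for m
        proof -
          have "(\<Sum>k<n. c m k) \<le> suminf (c m)" by (rule sum_le_suminf[OF sc]) (auto simp: cn)
          then show ?thesis using sumc[of m] XL[of "Suc m" i j] by simp
        qed
        ultimately show "sum b {..<n} \<le> L $ i $ j" by (intro LIMSEQ_le_const2) auto
      qed
      have "F L $ i $ j = suminf b" unfolding b_def by (rule Fent[OF Ln LG])
      then show ?thesis using up lo by simp
    qed
    then show ?thesis by (simp add: vec_eq_iff)
  qed
  have "(\<lambda>k. a k ** matpow L k) sums L"
    using summable_sums[OF summ[OF Ln LG]] FL unfolding F_def by simp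
  then have GL: "mat_le G L" by (rule Gmin[OF Ln])
  have "(G *v ones) $ i \<le> (L *v ones) $ i"
    using GL unfolding mat_le_def by (simp add: mv_comp sum_mono)
  then show ?thesis using Le[of i] by simp
qed

lemma harmonic_const:
  fixes M :: "real^'n^'n"
  assumes M: "mat_nonneg M" and Me: "M *v ones = ones" and irr: "irreducible_mat M"
    and y: "M *v y = y"
  shows "\<exists>c. y = c *\<^sub>R ones"
proof -
  obtain m where m: "\<And>j. y $ j \<le> y $ m" using exists_max_index[of "\<lambda>j. y $ j"] by blast
  define S where "S = {p. y $ p = y $ m}"
  have rowsum: "(\<Sum>l\<in>UNIV. M $ p $ l) = 1" for p
    using arg_cong[OF Me, of "\<lambda>v. v $ p"] by (simp add: mv_comp)
  have cl: "q \<in> S" if p: "p \<in> S" and pq: "M $ p $ q > 0" for p q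
  proof -
    have "(\<Sum>l\<in>UNIV. M $ p $ l * (y $ m - y $ l)) = y $ m * (\<Sum>l\<in>UNIV. M $ p $ l) - (\<Sum>l\<in>UNIV. M $ p $ l * y $ l)"
      by (simp add: right_diff_distrib sum_subtractf sum_distrib_left mult_ac)
    also have "\<dots> = y $ m - y $ p"
      using rowsum[of p] arg_cong[OF y, of "\<lambda>v. v $ p"] by (simp add: mv_comp)
    also have "\<dots> = 0" using p unfolding S_def by simp
    finally have s0: "(\<Sum>l\<in>UNIV. M $ p $ l * (y $ m - y $ l)) = 0" .
    have nn: "\<forall>l\<in>UNIV. M $ p $ l * (y $ m - y $ l) \<ge> 0"
      using M m unfolding mat_nonneg_def by simp
    have "M $ p $ q * (y $ m - y $ q) = 0"
      using sum_nonneg_eq_0_iff[of UNIV "\<lambda>l. M $ p $ l * (y $ m - y $ l)"] s0 nn by simp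
    then have "y $ m - y $ q = 0" using pq by simp
    then show ?thesis unfolding S_def by simp
  qed
  have "j \<in> S" for j
  proof (rule irred_closed[OF irr M, of m])
    show "m \<in> S" unfolding S_def by simp
  next
    fix p q assume "p \<in> S" "0 < M $ p $ q"
    then show "q \<in> S" by (rule cl)
  qed
  then have "y = y $ m *\<^sub>R ones" unfolding S_def by (simp add: vec_eq_iff)
  then show ?thesis by blast
qed

lemma matvec_sum:
  fixes f :: "'j \<Rightarrow> real^'n^'m"
  shows "(sum f S) *v x = (\<Sum>j\<in>S. f j *v x)"
  by (induction S rule: infinite_finite_induct) (simp_all add: matrix_vector_mult_add_rdistrib)

lemma scaleR_mv: "((c::real) *\<^sub>R (M::real^'n^'m)) *v x = c *\<^sub>R (M *v x)"
  by (simp add: vec_eq_iff mv_comp sum_distrib_left mult.assoc)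

lemma bl_inner_mv: "bounded_linear (\<lambda>X::real^'n^'m. inner v (X *v x))"
  by (rule bounded_linear_compose[OF bounded_linear_inner_right bl_mv])

lemma bl_mvr: "bounded_linear (\<lambda>x::real^'n. M *v x)"
  unfolding linear_conv_bounded_linear[symmetric] by simp

theorem proposition5:
  fixes A :: "int \<Rightarrow> real^'n^'n"
    and v z :: "real^'n"
    and G :: "real^'n^'n"
    and \<omega> \<omega>h :: real
  defines "Asum \<equiv> (\<Sum>k. A (int k - 1))"
  defines "w \<equiv> (\<Sum>k. (real_of_int (int k - 1)) *\<^sub>R A (int k - 1)) *v ones"
  defines "W \<equiv> (\<Sum>k. A (int k + 1) ** (\<Sum>j\<le>k + 1. matpow G j))"
  defines "R \<equiv> matrix_inv (mat 1 - A 0)"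
  defines "P \<equiv> (\<lambda>\<omega>::real. R ** W - \<omega> *\<^sub>R (R ** A 1 ** (mat 1 + G) ** (mat 1 - R ** W)))"
  defines "u \<equiv> R ** A 1 ** (mat 1 + G) *v z"
  defines "\<sigma>min \<equiv> Min {u $ i / z $ i | i. True}"
  defines "\<sigma>max \<equiv> Max {u $ i / z $ i | i. True}"
  assumes A_nonneg: "\<And>i. i \<ge> -1 \<Longrightarrow> mat_nonneg (A i)"
    and A_summable: "summable (\<lambda>k. A (int k - 1))"
    and A_irred: "irreducible_mat Asum"
    and A_stoch: "row_stochastic Asum"
    and iA_summable: "summable (\<lambda>k. (real_of_int (int k - 1)) *\<^sub>R A (int k - 1))"
    and v_pos: "\<And>i. v $ i > 0"
    and v_left: "v v* Asum = v"
    and v_norm: "v \<bullet> ones = 1"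
    and eta_neg: "v \<bullet> w < 0"
    and G_nonneg: "mat_nonneg G"
    and G_solves: "(\<lambda>k. A (int k - 1) ** matpow G k) sums G"
    and G_minimal: "\<And>X. mat_nonneg X \<Longrightarrow> (\<lambda>k. A (int k - 1) ** matpow X k) sums X
                        \<Longrightarrow> mat_le G X"
    and \<omega>h_ge: "\<omega>h \<ge> 1"
    and \<omega>h_cond: "mat_le (\<omega>h *\<^sub>R (A 1 ** (mat 1 + G) ** R ** (mat 1 - A 0 - W))) W"
    and \<omega>_range: "0 \<le> \<omega>" "\<omega> \<le> \<omega>h"
    and z_pos: "\<And>i. z $ i > 0"
    and z_eig: "P 0 *v z = spectral_radius (P 0) *\<^sub>R z"
  shows "spectral_radius (P 0) - \<omega> * (1 - spectral_radius (P 0)) * \<sigma>max \<le> spectral_radius (P \<omega>)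
       \<and> spectral_radius (P \<omega>) \<le> spectral_radius (P 0) - \<omega> * (1 - spectral_radius (P 0)) * \<sigma>min
       \<and> 0 \<le> \<sigma>min \<and> \<sigma>min \<le> spectral_radius (P 0)
       \<and> 0 \<le> \<sigma>max \<and> \<sigma>max \<le> spectral_radius (P 0)"
proof -
  define a where "a k = A (int k - 1)" for k
  have a0: "a 0 = A (-1)" and a1: "a 1 = A 0" and a2: "a (k + 2) = A (int k + 1)" for k
    unfolding a_def by (simp_all add: algebra_simps)
  have an: "mat_nonneg (a k)" for k unfolding a_def by (rule A_nonneg) simp
  have asums: "a sums Asum" unfolding Asum_def a_def using summable_sums[OF A_summable] .
  have asum: "summable a" using asums by (rule sums_summable)
  have Asn: "mat_nonneg Asum" and Ae: "Asum *v ones = ones"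
    using A_stoch unfolding row_stochastic_def by auto
  have Gs: "(\<lambda>k. a k ** matpow G k) sums G" unfolding a_def by (rule G_solves)
  have Gmin: "mat_le G X" if "mat_nonneg X" "(\<lambda>k. a k ** matpow X k) sums X" for X
    using G_minimal that unfolding a_def by blast
  have Ge: "(G *v ones) $ i \<le> 1" for i by (rule minimal_sub[OF an asums Ae G_nonneg Gs Gmin])
  have Gpe: "(matpow G k *v ones) $ i \<le> 1" for k i
    using matpow_vec_le[OF G_nonneg, of ones k i] Ge by simp
  have aleA: "mat_le (a k) Asum" for k
    unfolding mat_le_def
  proof (intro allI)
    fix i j
    have "Asum $ i $ j = (\<Sum>k. a k $ i $ j)"
      using suminf_entry[OF asum, of i j] sums_unique[OF asums] by simp
    moreover have "(\<Sum>k\<in>{k}. a k $ i $ j) \<le> (\<Sum>k. a k $ i $ j)"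
      by (rule sum_le_suminf[OF summable_entry[OF asum]]) (use an in \<open>auto simp: mat_nonneg_def\<close>)
    ultimately show "a k $ i $ j \<le> Asum $ i $ j" by simp
  qed
  have ne: "A 0 \<noteq> Asum"
  proof
    assume eq: "A 0 = Asum"
    have z: "a k = 0" if "k \<noteq> 1" for k
    proof -
      have "a k $ i $ j = 0" for i j
      proof -
        define f where "f k = a k $ i $ j - (if k = 1 then a 1 $ i $ j else 0)" for k
        have s1: "(\<lambda>k. a k $ i $ j) sums (Asum $ i $ j)" using sums_vec_nth[OF sums_vec_nth[OF asums]] .
        have s2: "(\<lambda>k. if k = 1 then a 1 $ i $ j else 0) sums (a 1 $ i $ j)" by (rule sums_single)
        have "f sums (Asum $ i $ j - a 1 $ i $ j)" unfolding f_def by (rule sums_diff[OF s1 s2])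
        then have fs: "f sums 0" using eq a1 by simp
        have fn: "f k \<ge> 0" for k using an[of k] unfolding f_def mat_nonneg_def by auto
        have "\<forall>n. f n = 0" using suminf_eq_zero_iff[OF sums_summable[OF fs] fn] sums_unique[OF fs] by simp
        then show ?thesis using that unfolding f_def by (metis diff_zero)
      qed
      then show ?thesis by (simp add: vec_eq_iff)
    qed
    have t1: "real_of_int (int k - 1) *\<^sub>R A (int k - 1) = 0" for k
      using z[of k] unfolding a_def by (cases "k = 1") auto
    have t: "(\<lambda>k. real_of_int (int k - 1) *\<^sub>R A (int k - 1)) = (\<lambda>k. 0)"
      by (rule ext) (rule t1)
    have "w = 0" unfolding w_def t by simp
    then show False using eta_neg by simp
  qed
  have A0n: "mat_nonneg (A 0)" using an[of 1] a1 by simp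
  have A0le: "mat_le (A 0) Asum" using aleA[of 1] a1 by simp
  note Rinv = inv_nonneg[OF A0n A0le Asn Ae A_irred ne]
  have RR: "(mat 1 - A 0) ** R = mat 1" and RL: "R ** (mat 1 - A 0) = mat 1" and Rn: "mat_nonneg R"
    using Rinv unfolding R_def by auto
  define S where "S k = (\<Sum>j\<le>k+1. matpow G j)" for k
  define T where "T k = A (int k + 1) ** S k" for k
  have W_eq: "W = suminf T" unfolding W_def T_def S_def by simp
  have Sn: "mat_nonneg (S k)" for k unfolding S_def by (intro mat_nonneg_sum mat_nonneg_matpow G_nonneg)
  have Se: "(S k *v ones) $ l \<le> real k + 2" for k l
  proof -
    have "(S k *v ones) $ l = (\<Sum>j\<le>k+1. (matpow G j *v ones) $ l)"
      unfolding S_def matvec_sum by (simp only: sum_component)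
    also have "\<dots> \<le> (\<Sum>j\<le>k+1. 1)" by (intro sum_mono Gpe)
    finally show ?thesis by simp
  qed
  have Apn: "mat_nonneg (A (int k + 1))" for k by (rule A_nonneg) simp
  have Tn: "mat_nonneg (T k)" for k unfolding T_def by (intro mat_nonneg_mult Apn Sn)
  have Tb: "T k $ i $ j \<le> (real k + 2) * (A (int k + 1) *v ones) $ i" for k i j
  proof -
    have "T k $ i $ j = (\<Sum>l\<in>UNIV. A (int k + 1) $ i $ l * S k $ l $ j)" unfolding T_def by (simp add: mm_comp)
    also have "\<dots> \<le> (\<Sum>l\<in>UNIV. A (int k + 1) $ i $ l * (real k + 2))"
    proof (intro sum_mono mult_left_mono)
      fix l
      show "S k $ l $ j \<le> real k + 2" using entry_le_rowsum[OF Sn, of k l j] Se[of k l] by simp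
      show "0 \<le> A (int k + 1) $ i $ l" using Apn unfolding mat_nonneg_def by simp
    qed
    also have "\<dots> = (real k + 2) * (A (int k + 1) *v ones) $ i" by (simp add: mv_comp sum_distrib_left mult.commute)
    finally show ?thesis .
  qed
  have sumb: "summable (\<lambda>k. (real k + 2) *\<^sub>R A (int k + 1))"
  proof -
    have s1: "summable (\<lambda>k. real_of_int (int (k + 2) - 1) *\<^sub>R A (int (k + 2) - 1))"
      using summable_ignore_initial_segment[OF iA_summable, of 2] .
    have s2: "summable (\<lambda>k. A (int (k + 2) - 1))"
      using summable_ignore_initial_segment[OF A_summable, of 2] .
    have "summable (\<lambda>k. real_of_int (int (k + 2) - 1) *\<^sub>R A (int (k + 2) - 1) + A (int (k + 2) - 1))"
      by (rule summable_add[OF s1 s2])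
    moreover have "real_of_int (int (k + 2) - 1) *\<^sub>R A (int (k + 2) - 1) + A (int (k + 2) - 1)
        = (real k + 2) *\<^sub>R A (int k + 1)" for k
    proof -
      have e1: "int (k + 2) - 1 = int k + 1" by simp
      have e2: "real_of_int (int k + 1) = real k + 1" by simp
      have e3: "real k + 1 + 1 = real k + 2" by simp
      have "real_of_int (int (k + 2) - 1) *\<^sub>R A (int (k + 2) - 1) + A (int (k + 2) - 1)
          = (real k + 1) *\<^sub>R A (int k + 1) + 1 *\<^sub>R A (int k + 1)" by (simp only: e1 e2 scaleR_one)
      also have "\<dots> = (real k + 1 + 1) *\<^sub>R A (int k + 1)" by (rule scaleR_add_left[symmetric])
      also have "\<dots> = (real k + 2) *\<^sub>R A (int k + 1)" by (simp only: e3)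
      finally show ?thesis .
    qed
    ultimately show ?thesis by simp
  qed
  have sumbi: "summable (\<lambda>k. (real k + 2) * (A (int k + 1) *v ones) $ i)" for i
  proof -
    have "summable (\<lambda>k. (((real k + 2) *\<^sub>R A (int k + 1)) *v ones) $ i)"
      using summable_vec_nth[OF bounded_linear.summable[OF bl_mv sumb]] .
    then show ?thesis by (simp add: scaleR_mv)
  qed
  have Tsum: "summable T"
  proof (rule summable_entries)
    fix i j
    show "summable (\<lambda>k. T k $ i $ j)"
    proof (rule summable_comparison_test'[OF sumbi[of i]])
      fix k :: nat
      show "norm (T k $ i $ j) \<le> (real k + 2) * (A (int k + 1) *v ones) $ i"
        using Tb[of k i j] Tn[of k] unfolding mat_nonneg_def by simp
    qed
  qed
  have Went: "W $ i $ j = (\<Sum>k. T k $ i $ j)" for i j unfolding W_eq by (rule suminf_entry[OF Tsum])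
  have Wn: "mat_nonneg W" unfolding mat_nonneg_def
    using Went suminf_nonneg[OF summable_entry[OF Tsum]] Tn unfolding mat_nonneg_def by simp
  have T0: "T 0 = A 1 ** (mat 1 + G)" unfolding T_def S_def by (simp add: atMost_Suc add.commute)
  have WT0: "mat_le (A 1 ** (mat 1 + G)) W" unfolding mat_le_def
  proof (intro allI)
    fix i j
    have "(\<Sum>k\<in>{0}. T k $ i $ j) \<le> (\<Sum>k. T k $ i $ j)"
      by (rule sum_le_suminf[OF summable_entry[OF Tsum]]) (use Tn in \<open>auto simp: mat_nonneg_def\<close>)
    then show "(A 1 ** (mat 1 + G)) $ i $ j \<le> W $ i $ j" using Went T0 by simp
  qed
  have WG: "W ** (mat 1 - G) = Asum - A 0 - G + A 0 ** G"
  proof -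
    have sa2: "summable (\<lambda>k. a (k + 2))" by (rule summable_ignore_initial_segment[OF asum])
    have sg2: "summable (\<lambda>k. a (k + 2) ** matpow G (k + 2))"
      by (rule summable_ignore_initial_segment[OF sums_summable[OF Gs]])
    have tk: "T k ** (mat 1 - G) = a (k + 2) - a (k + 2) ** matpow G (k + 2)" for k
    proof -
      have h: "S k ** (mat 1 - G) = mat 1 - matpow G (k + 2)"
        unfolding S_def using geom_telescope[where n="k + 1" and G=G] by simp
      have "T k ** (mat 1 - G) = A (int k + 1) ** (S k ** (mat 1 - G))"
        unfolding T_def by (rule matrix_mul_assoc[symmetric])
      also have "\<dots> = A (int k + 1) ** (mat 1 - matpow G (k + 2))" by (simp only: h)
      also have "\<dots> = a (k + 2) - a (k + 2) ** matpow G (k + 2)" by (simp only: mm_diff_l matrix_mul_rid a2)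
      finally show ?thesis .
    qed
    have "W ** (mat 1 - G) = (\<Sum>k. T k ** (mat 1 - G))"
      unfolding W_eq by (rule bounded_linear.suminf[OF bl_mult_right Tsum])
    also have "\<dots> = (\<Sum>k. a (k + 2) - a (k + 2) ** matpow G (k + 2))" by (simp add: tk)
    also have "\<dots> = (\<Sum>k. a (k + 2)) - (\<Sum>k. a (k + 2) ** matpow G (k + 2))"
      by (rule suminf_diff[OF sa2 sg2, symmetric])
    also have "(\<Sum>k. a (k + 2)) = Asum - A (-1) - A 0"
      using suminf_split_initial_segment[OF asum, of 2] sums_unique[OF asums] a0 a1
      by (simp add: numeral_2_eq_2)
    also have "(\<Sum>k. a (k + 2) ** matpow G (k + 2)) = G - A (-1) - A 0 ** G"
    proof -
      have eG: "G = (\<Sum>k. a (k + 2) ** matpow G (k + 2)) + (\<Sum>i<2. a i ** matpow G i)"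
      proof -
        have "G = (\<Sum>k. a k ** matpow G k)" by (rule sums_unique[OF Gs])
        also have "\<dots> = (\<Sum>k. a (k + 2) ** matpow G (k + 2)) + (\<Sum>i<2. a i ** matpow G i)"
          by (rule suminf_split_initial_segment[OF sums_summable[OF Gs]])
        finally show ?thesis .
      qed
      have e2: "(\<Sum>i<2. a i ** matpow G i) = A (-1) + A 0 ** G"
        using a0 a1 by (simp add: numeral_2_eq_2)
      have "(\<Sum>k. a (k + 2) ** matpow G (k + 2)) = G - (\<Sum>i<2. a i ** matpow G i)"
        by (subst eq_diff_eq) (rule eG[symmetric])
      then show ?thesis unfolding e2 by (simp only: diff_diff_eq)
    qed
    finally show ?thesis by (simp add: algebra_simps)
  qed
  have ident: "(mat 1 - A 0 - W) ** (mat 1 - G) = mat 1 - Asum"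
  proof -
    have "(mat 1 - A 0 - W) ** (mat 1 - G) = (mat 1 - G) - A 0 ** (mat 1 - G) - W ** (mat 1 - G)"
      by (simp only: mm_diff_r matrix_mul_lid)
    also have "\<dots> = (mat 1 - G) - (A 0 - A 0 ** G) - (Asum - A 0 - G + A 0 ** G)"
      unfolding WG by (simp only: mm_diff_l matrix_mul_rid)
    also have "\<dots> = mat 1 - Asum" by (simp add: algebra_simps)
    finally show ?thesis .
  qed
  \<comment> \<open>rho(P(0)) is at most one\<close>
  define rho where "rho = spectral_radius (P 0)"
  have P0: "P 0 = R ** W" unfolding P_def by simp
  have zeig: "(R ** W) *v z = rho *\<^sub>R z" using z_eig unfolding rho_def P0 .
  define r where "r = v v* (mat 1 - A 0 - W)"
  define q where "q = v v* (mat 1 - A 0)"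
  have rG: "r v* G = r"
  proof -
    have "r v* (mat 1 - G) = v v* (mat 1 - Asum)" unfolding r_def by (simp add: vector_matrix_mul_assoc ident)
    also have "\<dots> = 0" by (simp add: vector_matrix_mult_diff_rdistrib v_left)
    finally show ?thesis by (simp add: vector_matrix_mult_diff_rdistrib)
  qed
  have rGk: "r v* matpow G k = r" for k
    by (induction k) (simp_all add: vector_matrix_mul_assoc[symmetric] rG)
  have rz: "inner r (matpow G k *v z) = inner r z" for k
    using dot_lmul_matrix[of r "matpow G k" z] rGk by simp
  define Zm where "Zm = Max (range (\<lambda>i. z $ i))"
  have zle: "z $ i \<le> Zm" for i unfolding Zm_def by (rule Max_ge) auto
  have zn: "\<And>i. z $ i \<ge> 0" using z_pos less_imp_le by blast
  have Gkz: "0 \<le> (matpow G k *v z) $ i \<and> (matpow G k *v z) $ i \<le> Zm" for k i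
  proof
    show "0 \<le> (matpow G k *v z) $ i" by (rule nonneg_mv[OF mat_nonneg_matpow[OF G_nonneg] zn])
    have "(matpow G k *v z) $ i \<le> (matpow G k *v (Zm *\<^sub>R ones)) $ i"
      by (rule mono_mv[OF mat_nonneg_matpow[OF G_nonneg]]) (simp add: zle)
    also have "\<dots> = Zm * (matpow G k *v ones) $ i" by (simp add: matrix_vector_mult_scaleR)
    also have "\<dots> \<le> Zm * 1" using zle[of i] z_pos[of i] Gpe[of k i] by (intro mult_left_mono) auto
    finally show "(matpow G k *v z) $ i \<le> Zm" by simp
  qed
  define zs where "zs N = (1 / real (Suc N)) *\<^sub>R (\<Sum>k\<le>N. matpow G k *v z)" for N
  have zs_comp: "zs N $ i = (\<Sum>k\<le>N. (matpow G k *v z) $ i) / real (Suc N)" for N i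
    unfolding zs_def by simp
  have zs_box: "zs N \<in> cbox 0 (Zm *\<^sub>R ones)" for N
  proof -
    have "0 \<le> zs N $ i \<and> zs N $ i \<le> Zm" for i
    proof
      show "0 \<le> zs N $ i" unfolding zs_comp using Gkz by (intro divide_nonneg_pos sum_nonneg) auto
      have "(\<Sum>k\<le>N. (matpow G k *v z) $ i) \<le> (\<Sum>k\<le>N. Zm)" by (intro sum_mono) (use Gkz in auto)
      then have "(\<Sum>k\<le>N. (matpow G k *v z) $ i) \<le> real (Suc N) * Zm" by simp
      then show "zs N $ i \<le> Zm" unfolding zs_comp by (simp add: divide_le_eq mult.commute)
    qed
    then show ?thesis by (simp add: mem_box_cart)
  qed
  have rzs: "inner r (zs N) = inner r z" for N
    unfolding zs_def by (simp add: inner_sum_right rz)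
  have Gzs: "G *v zs N - zs N = (1 / real (Suc N)) *\<^sub>R (matpow G (Suc N) *v z - z)" for N
  proof -
    have tel: "G *v (\<Sum>k\<le>N. matpow G k *v z) - (\<Sum>k\<le>N. matpow G k *v z) = matpow G (Suc N) *v z - z" for N
    proof (induction N)
      case 0 then show ?case by simp
    next
      case (Suc N)
      have "G *v (\<Sum>k\<le>Suc N. matpow G k *v z) - (\<Sum>k\<le>Suc N. matpow G k *v z)
          = (G *v (\<Sum>k\<le>N. matpow G k *v z) - (\<Sum>k\<le>N. matpow G k *v z))
            + (G *v (matpow G (Suc N) *v z) - matpow G (Suc N) *v z)"
        by (simp add: matrix_vector_right_distrib algebra_simps)
      also have "\<dots> = matpow G (Suc (Suc N)) *v z - z"
        using Suc by (simp add: matrix_vector_mul_assoc)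
      finally show ?case .
    qed
    show ?thesis unfolding zs_def using tel[of N]
      by (simp add: matrix_vector_mult_scaleR scaleR_diff_right[symmetric])
  qed
  obtain zeta sg where zeta: "zeta \<in> cbox 0 (Zm *\<^sub>R ones)" "strict_mono sg" "(zs \<circ> sg) \<longlonglongrightarrow> zeta"
    using seq_compactE[OF compact_imp_seq_compact[OF compact_cbox], of zs] zs_box by metis
  have rzeta: "inner r zeta = inner r z"
  proof -
    have "(\<lambda>n. inner r ((zs \<circ> sg) n)) \<longlonglongrightarrow> inner r zeta" by (intro tendsto_intros zeta(3))
    moreover have "(\<lambda>n. inner r ((zs \<circ> sg) n)) = (\<lambda>n. inner r z)" by (simp add: rzs)
    ultimately show ?thesis using LIMSEQ_unique tendsto_const by metis
  qed
  have Gzeta: "G *v zeta = zeta"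
  proof -
    define d where "d N = G *v zs N - zs N" for N
    have d0: "d \<longlonglongrightarrow> 0"
    proof (rule vec_tendstoI)
      fix i
      have bnd: "\<bar>d N $ i\<bar> \<le> Zm * inverse (real (Suc N))" for N
      proof -
        have "\<bar>(matpow G (Suc N) *v z) $ i - z $ i\<bar> \<le> Zm"
          using Gkz[of "Suc N" i] zle[of i] zn[of i] unfolding abs_le_iff by linarith
        then have "\<bar>(matpow G (Suc N) *v z - z) $ i\<bar> \<le> Zm" by (simp only: vector_minus_component)
        then show ?thesis unfolding d_def Gzs
          by (simp add: divide_inverse abs_mult mult.commute mult_left_mono)
      qed
      have lim: "(\<lambda>N. Zm * inverse (real (Suc N))) \<longlonglongrightarrow> 0"
        using tendsto_mult_right_zero[OF LIMSEQ_inverse_real_of_nat, of Zm] by simp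
      have lim2: "(\<lambda>N. - (Zm * inverse (real (Suc N)))) \<longlonglongrightarrow> 0"
        using tendsto_minus[OF lim] by simp
      have e1: "\<forall>\<^sub>F N in sequentially. - (Zm * inverse (real (Suc N))) \<le> d N $ i"
      proof (intro always_eventually allI)
        fix N
        have "\<bar>d N $ i\<bar> \<le> Zm * inverse (real (Suc N))" by (rule bnd)
        then show "- (Zm * inverse (real (Suc N))) \<le> d N $ i" by (auto simp: abs_le_iff)
      qed
      have e2: "\<forall>\<^sub>F N in sequentially. d N $ i \<le> Zm * inverse (real (Suc N))"
      proof (intro always_eventually allI)
        fix N
        have "\<bar>d N $ i\<bar> \<le> Zm * inverse (real (Suc N))" by (rule bnd)
        then show "d N $ i \<le> Zm * inverse (real (Suc N))" by (auto simp: abs_le_iff)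
      qed
      show "(\<lambda>N. d N $ i) \<longlonglongrightarrow> 0 $ i"
        using tendsto_sandwich[OF e1 e2 lim2 lim] by simp
    qed
    have "(d \<circ> sg) \<longlonglongrightarrow> 0" by (rule LIMSEQ_subseq_LIMSEQ[OF d0 zeta(2)])
    moreover have "(d \<circ> sg) \<longlonglongrightarrow> G *v zeta - zeta"
    proof -
      have "(\<lambda>n. G *v (zs \<circ> sg) n - (zs \<circ> sg) n) \<longlonglongrightarrow> G *v zeta - zeta"
        by (intro tendsto_diff bounded_linear.tendsto[OF bl_mvr] zeta(3))
      then show ?thesis unfolding d_def by (simp add: o_def)
    qed
    ultimately have "G *v zeta - zeta = 0" using LIMSEQ_unique by blast
    then show ?thesis by simp
  qed
  have Azeta: "Asum *v zeta = zeta"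
  proof -
    have "G *v zeta = (\<Sum>k. (a k ** matpow G k) *v zeta)"
      using bounded_linear.suminf[OF bl_mv sums_summable[OF Gs]] sums_unique[OF Gs] by simp
    also have "\<dots> = (\<Sum>k. a k *v zeta)"
      by (simp add: matrix_vector_mul_assoc[symmetric] matpow_vec_eq[OF Gzeta])
    also have "\<dots> = Asum *v zeta"
      using bounded_linear.suminf[OF bl_mv asum] sums_unique[OF asums] by simp
    finally show ?thesis using Gzeta by simp
  qed
  obtain c where c: "zeta = c *\<^sub>R ones" using harmonic_const[OF Asn Ae A_irred Azeta] by blast
  have c0: "c \<ge> 0"
  proof -
    obtain i :: 'n where True by simp
    have "zeta $ i \<ge> 0" using zeta(1) by (simp add: mem_box_cart)
    then show ?thesis using c by simp
  qed
  define al where "al k = inner v (a k *v ones)" for k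
  have als: "al sums 1"
    using bounded_linear.sums[OF bl_inner_mv asums, of v ones] Ae v_norm unfolding al_def
    by (simp add: inner_commute)
  have etas: "(\<lambda>k. real_of_int (int k - 1) * al k) sums (inner v w)"
  proof -
    have "(\<lambda>k. inner v ((real_of_int (int k - 1) *\<^sub>R A (int k - 1)) *v ones)) sums inner v w"
      unfolding w_def by (rule bounded_linear.sums[OF bl_inner_mv summable_sums[OF iA_summable]])
    then show ?thesis unfolding al_def a_def by (simp add: scaleR_mv)
  qed
  have Wzeta: "inner v (W *v zeta) = c * (\<Sum>k. (real k + 2) * al (k + 2))"
  proof -
    have Tz: "inner v (T k *v zeta) = c * ((real k + 2) * al (k + 2))" for k
    proof -
      have "S k *v zeta = (real k + 2) *\<^sub>R zeta"
      proof -
        have "S k *v zeta = (\<Sum>j\<le>k+1. matpow G j *v zeta)" unfolding S_def by (rule matvec_sum)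
        also have "\<dots> = (\<Sum>j\<le>k+1. zeta)" by (simp add: matpow_vec_eq[OF Gzeta])
        finally show ?thesis by (simp add: scaleR_conv_of_real algebra_simps)
      qed
      note Sz = this
      have "T k *v zeta = A (int k + 1) *v (S k *v zeta)"
        unfolding T_def by (rule matrix_vector_mul_assoc[symmetric])
      also have "\<dots> = (real k + 2) *\<^sub>R (A (int k + 1) *v zeta)"
        by (simp only: Sz matrix_vector_mult_scaleR)
      also have "\<dots> = (real k + 2) *\<^sub>R (c *\<^sub>R (a (k + 2) *v ones))"
        by (simp only: c a2 matrix_vector_mult_scaleR)
      finally have "T k *v zeta = (real k + 2) *\<^sub>R (c *\<^sub>R (a (k + 2) *v ones))" .
      then have "inner v (T k *v zeta) = (real k + 2) * (c * al (k + 2))"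
        unfolding al_def by (simp only: inner_scaleR_right)
      then show ?thesis by (simp only: mult_ac)
    qed
    have "inner v (W *v zeta) = (\<Sum>k. inner v (T k *v zeta))"
      unfolding W_eq by (rule bounded_linear.suminf[OF bl_inner_mv Tsum])
    also have "\<dots> = (\<Sum>k. c * ((real k + 2) * al (k + 2)))" by (simp add: Tz)
    also have "\<dots> = c * (\<Sum>k. (real k + 2) * al (k + 2))"
    proof -
      have "summable (\<lambda>k. inner v (T k *v zeta))" by (rule bounded_linear.summable[OF bl_inner_mv Tsum])
      then have "summable (\<lambda>k. c * ((real k + 2) * al (k + 2)))" by (simp add: Tz)
      show ?thesis
      proof (cases "c = 0")
        case True then show ?thesis by simp
      next
        case False
        have "summable (\<lambda>k. (real k + 2) * al (k + 2))"
          using summable_mult[OF \<open>summable (\<lambda>k. c * ((real k + 2) * al (k + 2)))\<close>, of "1 / c"] False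
          by simp
        then show ?thesis by (rule suminf_mult)
      qed
    qed
    finally show ?thesis .
  qed
  have series_id: "1 - al 1 - (\<Sum>k. (real k + 2) * al (k + 2)) = - inner v w"
  proof -
    have sal: "summable al" using als by (rule sums_summable)
    have se: "summable (\<lambda>k. real_of_int (int k - 1) * al k)" using etas by (rule sums_summable)
    have s1: "summable (\<lambda>k. al (k + 2))" by (rule summable_ignore_initial_segment[OF sal])
    have s2: "summable (\<lambda>k. real_of_int (int (k + 2) - 1) * al (k + 2))"
      by (rule summable_ignore_initial_segment[OF se])
    have e1: "1 = (\<Sum>k. al (k + 2)) + al 0 + al 1"
      using suminf_split_initial_segment[OF sal, of 2] sums_unique[OF als] by (simp add: numeral_2_eq_2)
    have e2: "inner v w = (\<Sum>k. real_of_int (int (k + 2) - 1) * al (k + 2)) - al 0"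
      using suminf_split_initial_segment[OF se, of 2] sums_unique[OF etas] by (simp add: numeral_2_eq_2)
    have e3: "(\<Sum>k. (real k + 2) * al (k + 2)) = (\<Sum>k. real_of_int (int (k + 2) - 1) * al (k + 2)) + (\<Sum>k. al (k + 2))"
    proof -
      have "(\<Sum>k. real_of_int (int (k + 2) - 1) * al (k + 2)) + (\<Sum>k. al (k + 2))
          = (\<Sum>k. real_of_int (int (k + 2) - 1) * al (k + 2) + al (k + 2))" by (rule suminf_add[OF s2 s1])
      also have "\<dots> = (\<Sum>k. (real k + 2) * al (k + 2))" by (simp add: algebra_simps)
      finally show ?thesis by simp
    qed
    show ?thesis using e1 e2 e3 by simp
  qed
  have rzeta2: "inner r zeta = - c * inner v w"
  proof -
    have "inner r zeta = inner v ((mat 1 - A 0 - W) *v zeta)" unfolding r_def by (rule dot_lmul_matrix)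
    also have "\<dots> = inner v zeta - inner v (A 0 *v zeta) - inner v (W *v zeta)"
      by (simp add: matrix_vector_mult_diff_rdistrib inner_diff_right)
    also have "inner v zeta = c" using v_norm c by (simp add: inner_commute)
    also have "inner v (A 0 *v zeta) = c * al 1" unfolding al_def using c a1
      by (simp add: matrix_vector_mult_scaleR)
    also have "inner v (W *v zeta) = c * (\<Sum>k. (real k + 2) * al (k + 2))" by (rule Wzeta)
    also have "c - c * al 1 - c * (\<Sum>k. (real k + 2) * al (k + 2))
        = c * (1 - al 1 - (\<Sum>k. (real k + 2) * al (k + 2)))" by (simp only: right_diff_distrib mult_1_right)
    also have "\<dots> = c * (- inner v w)" by (simp only: series_id)
    finally show ?thesis by simp
  qed
  have rz0: "inner r z \<ge> 0"
  proof -
    have "0 \<le> c * (- inner v w)" using c0 eta_neg by (intro mult_nonneg_nonneg) auto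
    then show ?thesis using rzeta rzeta2 by simp
  qed
  have qn: "q $ j \<ge> 0" for j
  proof -
    have "(v v* A 0) $ j \<le> (v v* Asum) $ j"
      unfolding vector_matrix_mult_def vec_lambda_beta
    proof (rule sum_mono)
      fix i
      show "v $ i * A 0 $ i $ j \<le> v $ i * Asum $ i $ j"
        using A0le v_pos[of i] unfolding mat_le_def by (simp add: mult_left_mono)
    qed
    then show ?thesis unfolding q_def using v_left by (simp add: vector_matrix_mult_diff_rdistrib)
  qed
  have qz: "inner q z > 0"
  proof (rule ccontr)
    assume "\<not> inner q z > 0"
    then have "(\<Sum>j\<in>UNIV. q $ j * z $ j) \<le> 0" by (simp add: inner_vec_def)
    moreover have "\<forall>j\<in>UNIV. q $ j * z $ j \<ge> 0" using qn zn by simp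
    ultimately have "\<forall>j\<in>UNIV. q $ j * z $ j = 0"
      using sum_nonneg_eq_0_iff[of UNIV "\<lambda>j. q $ j * z $ j"] by (simp add: order_antisym sum_nonneg)
    then have q0: "q $ j = 0" for j
    proof -
      assume h: "\<forall>j\<in>UNIV. q $ j * z $ j = 0"
      have "q $ j * z $ j = 0" using h by simp
      then show "q $ j = 0" using z_pos[of j] by simp
    qed
    have "A 0 = Asum"
    proof -
      have "(Asum - A 0) $ i $ j = 0" for i j
      proof -
        have "(\<Sum>i\<in>UNIV. v $ i * (Asum - A 0) $ i $ j) = (v v* Asum - v v* A 0) $ j"
          by (simp add: vector_matrix_mult_def sum_subtractf right_diff_distrib)
        also have "\<dots> = q $ j" unfolding q_def using v_left by (simp add: vector_matrix_mult_diff_rdistrib)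
        finally have s0: "(\<Sum>i\<in>UNIV. v $ i * (Asum - A 0) $ i $ j) = 0" using q0 by simp
        have "\<forall>i\<in>UNIV. v $ i * (Asum - A 0) $ i $ j \<ge> 0"
          using A0le v_pos unfolding mat_le_def by (simp add: less_imp_le)
        then have "\<forall>i\<in>UNIV. v $ i * (Asum - A 0) $ i $ j = 0"
          using sum_nonneg_eq_0_iff[of UNIV "\<lambda>i. v $ i * (Asum - A 0) $ i $ j"] s0 by simp
        then have "v $ i * (Asum - A 0) $ i $ j = 0" by simp
        then show ?thesis using v_pos[of i] by simp
      qed
      then show ?thesis by (simp add: vec_eq_iff)
    qed
    then show False using ne by simp
  qed
  have qP: "q v* (mat 1 - R ** W) = r"
  proof -
    have "(mat 1 - A 0) ** (mat 1 - R ** W) = mat 1 - A 0 - W"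
      by (simp add: mm_diff_l matrix_mul_assoc RR)
    then show ?thesis unfolding q_def r_def by (simp add: vector_matrix_mul_assoc)
  qed
  have "inner r z = inner q ((mat 1 - R ** W) *v z)" unfolding qP[symmetric] by (rule dot_lmul_matrix)
  also have "\<dots> = (1 - rho) * inner q z"
    by (simp add: matrix_vector_mult_diff_rdistrib zeig inner_diff_right algebra_simps)
  finally have "(1 - rho) * inner q z \<ge> 0" using rz0 by simp
  then have rho1: "rho \<le> 1" using qz by (simp add: zero_le_mult_iff)
  define Bm where "Bm = R ** A 1 ** (mat 1 + G)"
  have Bmn: "mat_nonneg Bm" unfolding Bm_def
    by (intro mat_nonneg_mult mat_nonneg_add Rn A_nonneg mat_nonneg_one G_nonneg) simp
  have u_eq: "u = Bm *v z" unfolding u_def Bm_def ..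
  have un: "u $ i \<ge> 0" for i unfolding u_eq by (rule nonneg_mv[OF Bmn zn])
  have uz: "u $ i \<le> rho * z $ i" for i
  proof -
    have "(R *v ((W - A 1 ** (mat 1 + G)) *v z)) $ i \<ge> 0"
    proof (rule nonneg_mv[OF Rn])
      fix j
      show "((W - A 1 ** (mat 1 + G)) *v z) $ j \<ge> 0"
        by (rule nonneg_mv[OF _ zn]) (use WT0 in \<open>simp add: mat_nonneg_def mat_le_def\<close>)
    qed
    moreover have "R *v ((W - A 1 ** (mat 1 + G)) *v z) = (R ** W) *v z - u"
      unfolding u_eq Bm_def
      by (simp add: matrix_vector_mult_diff_rdistrib matrix_vector_mult_diff_distrib matrix_vector_mul_assoc matrix_mul_assoc)
    ultimately show ?thesis using zeig by simp
  qed
  define rat where "rat i = u $ i / z $ i" for i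
  have setr: "{u $ i / z $ i | i. True} = range rat" unfolding rat_def by auto
  have rat0: "0 \<le> rat i" and ratr: "rat i \<le> rho" for i
    unfolding rat_def using un[of i] uz[of i] z_pos[of i] by (auto simp: divide_le_eq)
  have fin: "finite (range rat)" by simp
  have smin: "\<sigma>min = Min (range rat)" unfolding \<sigma>min_def setr ..
  have smax: "\<sigma>max = Max (range rat)" unfolding \<sigma>max_def setr ..
  have smin_le: "\<sigma>min \<le> rat i" for i unfolding smin by (rule Min_le) auto
  have smax_ge: "rat i \<le> \<sigma>max" for i unfolding smax by (rule Max_ge) auto
  obtain i0 :: 'n where True by simp
  have s1: "0 \<le> \<sigma>min" unfolding smin using rat0 by (subst Min_ge_iff) auto
  have s2: "\<sigma>min \<le> rho" using smin_le[of i0] ratr[of i0] by simp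
  have s3: "0 \<le> \<sigma>max" using smax_ge[of i0] rat0[of i0] by simp
  have s4: "\<sigma>max \<le> rho" unfolding smax using ratr by (subst Max_le_iff) auto
  have uzmax: "u $ i \<le> \<sigma>max * z $ i" for i
    using smax_ge[of i] z_pos[of i] unfolding rat_def by (simp add: divide_le_eq)
  have uzmin: "\<sigma>min * z $ i \<le> u $ i" for i
    using smin_le[of i] z_pos[of i] unfolding rat_def by (simp add: le_divide_eq)
  define X where "X = A 1 ** (mat 1 + G) ** R ** (mat 1 - A 0 - W)"
  have IRW: "mat 1 - R ** W = R ** (mat 1 - A 0 - W)"
  proof -
    have "R ** (mat 1 - A 0 - W) = R ** (mat 1 - A 0) - R ** W" by (rule mm_diff_l)
    then show ?thesis by (simp only: RL)
  qed
  have Pw: "P \<omega> = R ** (W - \<omega> *\<^sub>R X)"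
  proof -
    have "R ** A 1 ** (mat 1 + G) ** (mat 1 - R ** W) = R ** X"
      unfolding IRW X_def by (simp add: matrix_mul_assoc)
    then show ?thesis unfolding P_def
      by (simp add: mm_diff_l matrix_scalar_ac scalar_matrix_assoc)
  qed
  have WX: "mat_nonneg (W - \<omega> *\<^sub>R X)" unfolding mat_nonneg_def
  proof (intro allI)
    fix i j
    have h: "\<omega>h * X $ i $ j \<le> W $ i $ j" using \<omega>h_cond unfolding mat_le_def X_def by simp
    have w0: "W $ i $ j \<ge> 0" using Wn unfolding mat_nonneg_def by simp
    show "0 \<le> (W - \<omega> *\<^sub>R X) $ i $ j"
    proof (cases "X $ i $ j \<le> 0")
      case True
      then have "\<omega> * X $ i $ j \<le> 0" using \<omega>_range by (simp add: mult_nonneg_nonpos)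
      then show ?thesis using w0 by simp
    next
      case False
      then have "\<omega> * X $ i $ j \<le> \<omega>h * X $ i $ j" using \<omega>_range by (simp add: mult_right_mono)
      then show ?thesis using h by simp
    qed
  qed
  have Pn: "mat_nonneg (P \<omega>)" unfolding Pw by (rule mat_nonneg_mult[OF Rn WX])
  have Pz: "P \<omega> *v z = rho *\<^sub>R z - (\<omega> * (1 - rho)) *\<^sub>R u"
  proof -
    have "(mat 1 - R ** W) *v z = (1 - rho) *\<^sub>R z"
      by (simp add: matrix_vector_mult_diff_rdistrib zeig algebra_simps)
    then have "(R ** A 1 ** (mat 1 + G) ** (mat 1 - R ** W)) *v z = (1 - rho) *\<^sub>R u"
      unfolding u_eq Bm_def by (simp add: matrix_vector_mul_assoc[symmetric] matrix_vector_mult_scaleR)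
    then show ?thesis unfolding P_def
      by (simp add: matrix_vector_mult_diff_rdistrib scaleR_mv zeig)
  qed
  have Pzi: "(P \<omega> *v z) $ i = rho * z $ i - \<omega> * (1 - rho) * u $ i" for i
    using Pz by simp
  have wr: "\<omega> * (1 - rho) \<ge> 0" using \<omega>_range rho1 by simp
  have lo: "(rho - \<omega> * (1 - rho) * \<sigma>max) * z $ i \<le> (P \<omega> *v z) $ i" for i
  proof -
    have "\<omega> * (1 - rho) * u $ i \<le> \<omega> * (1 - rho) * (\<sigma>max * z $ i)"
      by (rule mult_left_mono[OF uzmax wr])
    then show ?thesis unfolding Pzi by (simp add: algebra_simps)
  qed
  have hi: "(P \<omega> *v z) $ i \<le> (rho - \<omega> * (1 - rho) * \<sigma>min) * z $ i" for i
  proof -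
    have "\<omega> * (1 - rho) * (\<sigma>min * z $ i) \<le> \<omega> * (1 - rho) * u $ i"
      by (rule mult_left_mono[OF uzmin wr])
    then show ?thesis unfolding Pzi by (simp add: algebra_simps)
  qed
  have cw: "rho - \<omega> * (1 - rho) * \<sigma>max \<le> spectral_radius (P \<omega>) \<and>
      spectral_radius (P \<omega>) \<le> rho - \<omega> * (1 - rho) * \<sigma>min"
    by (rule cw_bounds[OF Pn z_pos lo hi])
  show ?thesis using cw s1 s2 s3 s4 unfolding rho_def by simp
qed

end
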